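(* Let $\Gamma_n$ ($n\in\mathbb N$) be a sequence of nonatomic routing games on a fixed graph with fixed OD pairs $\mathcal I$, path sets $\mathcal P^i$ and edge costs $(c_e)_{e\in\mathcal E}$, where in $\Gamma_n$ OD pair $i$ has demand $m_n^i\ge 0$, total inflow $M_n=\sum_i m_n^i>0$ with $M_n\to\omega\in\{0,\infty\}$, and relative inflows $\lambda_n^i=m_n^i/M_n$. Let $c$ be a benchmark for $(c_e)$ at $\omega$. Suppose the network is tight relative to $c$, i.e. $0<\max_{i\in\mathcal I}\alpha^i<\infty$, where $\alpha^i=\min_{p\in\mathcal P^i}\max_{e\in p}\alpha_e$ and $\alpha_e=\lim_{x\to\omega}c_e(x)/c(x)$, and that every OD pair is salient, i.e. $\liminf_{n\to\infty}\lambda_n^i>0$ for every $i\in\mathcal I$. Then $\mathrm{PoA}(\Gamma_n)\to 1$.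
   Context: A nonatomic routing game consists of: a finite directed multigraph with edge set $\mathcal E$; a finite set $\mathcal I$ of OD pairs, each $i$ with demand $m^i\ge 0$ and a nonempty finite set $\mathcal P^i$ of paths from its origin to its destination, the $\mathcal P^i$ pairwise disjoint, $\mathcal P=\bigcup_i\mathcal P^i$; and continuous nondecreasing edge costs $c_e:[0,\infty)\to[0,\infty)$. Feasible flows: $f\in\mathbb R_+^{\mathcal P}$ with $\sum_{p\in\mathcal P^i}f_p=m^i$; loads $x_e=\sum_{p\ni e}f_p$; path costs $c_p(f)=\sum_{e\in p}c_e(x_e)$. A Wardrop equilibrium is a feasible $f^*$ with $c_p(f^* )\le c_{p'}(f^* )$ whenever $p,p'\in\mathcal P^i$, $f^*_p>0$. Social cost $L(x)=\sum_e x_ec_e(x_e)$; $\mathrm{Opt}$ its minimum over feasible loads, $\mathrm{Eq}=L(x^* )$ at an equilibrium load, $\mathrm{PoA}=\mathrm{Eq}/\mathrm{Opt}$ (set to $1$ if $\mathrm{Opt}=0$). A function $g:(0,\infty)\to(0,\infty)$ is regularly varying at $\omega$ if $\lim_{t\to\omega}g(tx)/g(t)$ is finite and nonzero for every $x>0$; a regularly varying (at $\omega$) function $c$ is a benchmark for $(c_e)$ at $\omega$ if $\alpha_e=\lim_{x\to\omega}c_e(x)/c(x)\in[0,\infty]$ exists for every edge $e$. *)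

theory Defs
  imports Complex_Main "HOL-Library.Extended_Real" "HOL-Library.Liminf_Limsup"
begin

fun walk :: "('e \<Rightarrow> 'v) \<Rightarrow> ('e \<Rightarrow> 'v) \<Rightarrow> 'v \<Rightarrow> 'e list \<Rightarrow> 'v \<Rightarrow> bool" where
  "walk src tgt u [] v = (u = v)"
| "walk src tgt u (e # es) v = (src e = u \<and> walk src tgt (tgt e) es v)"

definition is_path :: "'e set \<Rightarrow> ('e \<Rightarrow> 'v) \<Rightarrow> ('e \<Rightarrow> 'v) \<Rightarrow> 'v \<Rightarrow> 'v \<Rightarrow> 'e list \<Rightarrow> bool" where
  "is_path E src tgt u v p \<longleftrightarrow> set p \<subseteq> E \<and> distinct p \<and> walk src tgt u p v"

definition routing_network ::
  "'e set \<Rightarrow> ('e \<Rightarrow> 'v) \<Rightarrow> ('e \<Rightarrow> 'v) \<Rightarrow> 'i set \<Rightarrow> ('i \<Rightarrow> 'v) \<Rightarrow> ('i \<Rightarrow> 'v)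
    \<Rightarrow> ('i \<Rightarrow> 'e list set) \<Rightarrow> bool" where
  "routing_network E src tgt I orig dest P \<longleftrightarrow>
     finite E \<and> finite I \<and>
     (\<forall>i\<in>I. finite (P i) \<and> P i \<noteq> {} \<and> (\<forall>p\<in>P i. is_path E src tgt (orig i) (dest i) p)) \<and>
     (\<forall>i\<in>I. \<forall>j\<in>I. i \<noteq> j \<longrightarrow> P i \<inter> P j = {})"

definition admissible_costs :: "'e set \<Rightarrow> ('e \<Rightarrow> real \<Rightarrow> real) \<Rightarrow> bool" where
  "admissible_costs E c \<longleftrightarrow>
     (\<forall>e\<in>E. continuous_on {0..} (c e) \<and> mono_on {0..} (c e) \<and> (\<forall>x\<ge>0. c e x \<ge> 0))"

definition all_paths :: "'i set \<Rightarrow> ('i \<Rightarrow> 'e list set) \<Rightarrow> 'e list set" where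
  "all_paths I P = (\<Union>i\<in>I. P i)"

definition load :: "'i set \<Rightarrow> ('i \<Rightarrow> 'e list set) \<Rightarrow> ('e list \<Rightarrow> real) \<Rightarrow> 'e \<Rightarrow> real" where
  "load I P f e = (\<Sum>p\<in>{p\<in>all_paths I P. e \<in> set p}. f p)"

definition path_cost ::
  "('e \<Rightarrow> real \<Rightarrow> real) \<Rightarrow> 'i set \<Rightarrow> ('i \<Rightarrow> 'e list set) \<Rightarrow> ('e list \<Rightarrow> real) \<Rightarrow> 'e list \<Rightarrow> real" where
  "path_cost c I P f p = (\<Sum>e\<in>set p. c e (load I P f e))"

definition feasible :: "'i set \<Rightarrow> ('i \<Rightarrow> 'e list set) \<Rightarrow> ('i \<Rightarrow> real) \<Rightarrow> ('e list \<Rightarrow> real) \<Rightarrow> bool" where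
  "feasible I P m f \<longleftrightarrow> (\<forall>p\<in>all_paths I P. f p \<ge> 0) \<and> (\<forall>i\<in>I. (\<Sum>p\<in>P i. f p) = m i)"

definition wardrop ::
  "('e \<Rightarrow> real \<Rightarrow> real) \<Rightarrow> 'i set \<Rightarrow> ('i \<Rightarrow> 'e list set) \<Rightarrow> ('i \<Rightarrow> real) \<Rightarrow> ('e list \<Rightarrow> real) \<Rightarrow> bool" where
  "wardrop c I P m f \<longleftrightarrow> feasible I P m f \<and>
     (\<forall>i\<in>I. \<forall>p\<in>P i. \<forall>q\<in>P i. f p > 0 \<longrightarrow> path_cost c I P f p \<le> path_cost c I P f q)"

definition social_cost :: "'e set \<Rightarrow> ('e \<Rightarrow> real \<Rightarrow> real) \<Rightarrow> ('e \<Rightarrow> real) \<Rightarrow> real" where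
  "social_cost E c x = (\<Sum>e\<in>E. x e * c e (x e))"

definition opt_cost ::
  "'e set \<Rightarrow> ('e \<Rightarrow> real \<Rightarrow> real) \<Rightarrow> 'i set \<Rightarrow> ('i \<Rightarrow> 'e list set) \<Rightarrow> ('i \<Rightarrow> real) \<Rightarrow> real" where
  "opt_cost E c I P m = Inf {social_cost E c (load I P f) | f. feasible I P m f}"

definition poa ::
  "'e set \<Rightarrow> ('e \<Rightarrow> real \<Rightarrow> real) \<Rightarrow> 'i set \<Rightarrow> ('i \<Rightarrow> 'e list set) \<Rightarrow> ('i \<Rightarrow> real)
    \<Rightarrow> ('e list \<Rightarrow> real) \<Rightarrow> real" where
  "poa E c I P m f = (if opt_cost E c I P m = 0 then 1
                      else social_cost E c (load I P f) / opt_cost E c I P m)"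

text \<open>The point omega is encoded by the filter F (at_right 0 for omega = 0, at_top for omega = infinity).\<close>

definition regularly_varying :: "real filter \<Rightarrow> (real \<Rightarrow> real) \<Rightarrow> bool" where
  "regularly_varying F g \<longleftrightarrow>
     (\<forall>t>0. g t > 0) \<and> (\<forall>x>0. \<exists>L. L \<noteq> 0 \<and> ((\<lambda>t. g (t * x) / g t) \<longlongrightarrow> L) F)"

definition benchmark ::
  "real filter \<Rightarrow> 'e set \<Rightarrow> ('e \<Rightarrow> real \<Rightarrow> real) \<Rightarrow> (real \<Rightarrow> real) \<Rightarrow> ('e \<Rightarrow> ereal) \<Rightarrow> bool" where
  "benchmark F E c g \<alpha> \<longleftrightarrow> regularly_varying F g \<and>
     (\<forall>e\<in>E. ((\<lambda>x. ereal (c e x / g x)) \<longlongrightarrow> \<alpha> e) F)"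

text \<open>alpha^i = min over paths of max over edges of alpha_e (the max over an empty edge set is taken as 0).\<close>
definition od_alpha :: "('i \<Rightarrow> 'e list set) \<Rightarrow> ('e \<Rightarrow> ereal) \<Rightarrow> 'i \<Rightarrow> ereal" where
  "od_alpha P \<alpha> i = (INF p\<in>P i. max 0 (SUP e\<in>set p. \<alpha> e))"

end

theory Submission
  imports Defs "HOL-Analysis.Analysis"
begin

lemma young_pow:
  fixes u w \<rho> :: real
  assumes "u \<ge> 0" "w \<ge> 0" "\<rho> \<ge> 0"
  shows "u * w powr \<rho> \<le> (u powr (\<rho>+1) + \<rho> * w powr (\<rho>+1)) / (\<rho>+1)"
proof (cases "u = 0 \<or> w = 0")
  case True
  then show ?thesis using assms by (auto intro!: divide_nonneg_pos add_nonneg_nonneg)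
next
  case False
  then have up: "u > 0" and wp: "w > 0" using assms by auto
  have "(u powr (\<rho>+1)) powr (1/(\<rho>+1)) * (w powr (\<rho>+1)) powr (\<rho>/(\<rho>+1))
        \<le> (1/(\<rho>+1)) * u powr (\<rho>+1) + (\<rho>/(\<rho>+1)) * w powr (\<rho>+1)"
    using assms up wp by (intro Youngs_inequality_0) (auto simp: field_simps)
  moreover have "(u powr (\<rho>+1)) powr (1/(\<rho>+1)) = u"
    using up assms by (simp add: powr_powr)
  moreover have "(w powr (\<rho>+1)) powr (\<rho>/(\<rho>+1)) = w powr \<rho>"
    using wp assms by (simp add: powr_powr)
  ultimately show ?thesis using assms by (simp add: add_divide_distrib)
qed

lemma young_scaled:
  fixes a \<rho> \<epsilon> :: real
  assumes "\<epsilon> > 0" "a \<ge> 0" "\<rho> \<ge> 0"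
  obtains \<delta> \<eta> where "\<delta> > 0" "\<delta> \<le> 1/2" "\<eta> > 0" "\<eta> \<le> 1"
    "\<And>\<phi> u w. mono_on {0..1} \<phi> \<Longrightarrow> (\<forall>s\<in>{0..1}. \<phi> s \<ge> 0) \<Longrightarrow>
       (\<forall>s\<in>{\<delta>..1}. \<bar>\<phi> s - a * s powr \<rho>\<bar> \<le> \<eta>) \<Longrightarrow> u \<in> {0..1} \<Longrightarrow> w \<in> {0..1} \<Longrightarrow>
       u * \<phi> w \<le> (u * \<phi> u + \<rho> * (w * \<phi> w)) / (\<rho>+1) + \<epsilon>"
proof -
  define \<eta> where "\<eta> = min 1 (\<epsilon>/4)"
  have ev1: "\<forall>\<^sub>F \<delta> in at_right 0. \<rho> * a * \<delta> powr \<rho> \<le> \<epsilon>/2"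
  proof (cases "\<rho> = 0")
    case True then show ?thesis using assms by simp
  next
    case False
    then have "((\<lambda>x. \<rho> * a * x powr \<rho>) \<longlongrightarrow> \<rho> * a * 0) (at_right 0)"
    proof (intro tendsto_mult tendsto_const)
      have "((\<lambda>x. x powr \<rho>) \<longlongrightarrow> 0 powr \<rho>) (at_right (0::real))"
        using False assms eventually_at_right_less[of "0::real"]
        by (intro tendsto_powr') (auto intro!: tendsto_ident_at elim: eventually_mono)
      then show "((\<lambda>x. x powr \<rho>) \<longlongrightarrow> 0) (at_right (0::real))" by simp
    qed
    then have "\<forall>\<^sub>F x in at_right 0. \<rho> * a * x powr \<rho> < \<epsilon>/2"
      using assms by (intro order_tendstoD) auto
    then show ?thesis by eventually_elim simp
  qed
  have ev2: "\<forall>\<^sub>F \<delta> in at_right (0::real). \<delta> * (a+1) \<le> \<epsilon> \<and> \<delta> \<le> 1/2 \<and> \<delta> > 0"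
  proof -
    have "((\<lambda>x. x * (a+1)) \<longlongrightarrow> 0 * (a+1)) (at_right (0::real))"
      by (intro tendsto_intros)
    then have "\<forall>\<^sub>F x in at_right 0. x * (a+1) < \<epsilon>"
      using assms by (intro order_tendstoD) auto
    moreover have "\<forall>\<^sub>F x in at_right (0::real). x < 1/2" 
      unfolding eventually_at_right_field by (intro exI[of _ "1/2"]) auto
    moreover have "\<forall>\<^sub>F x in at_right (0::real). x > 0" 
      by (simp add: eventually_at_right_less) 
    ultimately show ?thesis by eventually_elim auto
  qed
  from eventually_happens[OF eventually_conj[OF ev1 ev2]]
  obtain \<delta> where d1: "\<rho> * a * \<delta> powr \<rho> \<le> \<epsilon>/2" and d2: "\<delta> * (a+1) \<le> \<epsilon>" "\<delta> \<le> 1/2" "\<delta> > 0"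
    by auto
  show ?thesis
  proof (rule that[of \<delta> \<eta>])
    show "\<delta> > 0" "\<delta> \<le> 1/2" using d2 by auto
    show "\<eta> > 0" "\<eta> \<le> 1" using assms by (auto simp: \<eta>_def)
    fix \<phi> :: "real \<Rightarrow> real" and u w :: real
    assume mono: "mono_on {0..1} \<phi>" and nn: "\<forall>s\<in>{0..1}. \<phi> s \<ge> 0"
      and cl: "\<forall>s\<in>{\<delta>..1}. \<bar>\<phi> s - a * s powr \<rho>\<bar> \<le> \<eta>" and u: "u \<in> {0..1}" and w: "w \<in> {0..1}"
    have \<eta>e: "\<eta> \<le> \<epsilon>/4" "\<eta> \<le> 1" by (auto simp: \<eta>_def)
    have r1: "\<rho> + 1 > 0" using assms by simp
    have phi1: "\<phi> 1 \<le> a + 1" using cl[rule_format, of 1] d2 \<eta>e by auto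
    have phile: "\<phi> s \<le> a + 1" if "s \<in> {0..1}" for s
      using mono_onD[OF mono that, of 1] that phi1 by auto
    have rhs_nn: "0 \<le> (u * \<phi> u + \<rho> * (w * \<phi> w)) / (\<rho>+1)"
      using nn u w assms by (intro divide_nonneg_pos add_nonneg_nonneg mult_nonneg_nonneg) auto
    show "u * \<phi> w \<le> (u * \<phi> u + \<rho> * (w * \<phi> w)) / (\<rho>+1) + \<epsilon>"
    proof (cases "u < \<delta>")
      case True
      have "u * \<phi> w \<le> \<delta> * (a+1)"
        using True u w nn phile[OF w] by (intro mult_mono) auto
      then show ?thesis using d2 rhs_nn by linarith
    next
      case uge: False
      show ?thesis
      proof (cases "w < \<delta>")
        case True
        have wu: "w \<le> u" using True uge by auto
        have pwu: "\<phi> w \<le> \<phi> u" using mono_onD[OF mono w u wu] .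
        have pwd: "\<phi> w \<le> \<phi> \<delta>" using mono_onD[OF mono w, of \<delta>] True d2 by auto
        have pd: "\<phi> \<delta> \<le> a * \<delta> powr \<rho> + \<eta>" using cl[rule_format, of \<delta>] d2 by auto
        have "u * \<phi> w = u * \<phi> w / (\<rho>+1) + \<rho> * (u * \<phi> w) / (\<rho>+1)"
        proof -
          have "u * \<phi> w / (\<rho>+1) + \<rho> * (u * \<phi> w) / (\<rho>+1) = ((\<rho>+1) * (u * \<phi> w)) / (\<rho>+1)"
            by (simp add: add_divide_distrib[symmetric] algebra_simps)
          also have "\<dots> = u * \<phi> w" using r1 by simp
          finally show ?thesis by simp
        qed
        moreover have "u * \<phi> w / (\<rho>+1) \<le> u * \<phi> u / (\<rho>+1)"
          using pwu u r1 by (intro divide_right_mono mult_left_mono) auto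
        moreover have "\<rho> * (u * \<phi> w) / (\<rho>+1) \<le> \<rho> * (a * \<delta> powr \<rho> + \<eta>) / (\<rho>+1)"
        proof -
          have "u * \<phi> w \<le> 1 * (a * \<delta> powr \<rho> + \<eta>)"
            using u nn w pwd pd by (intro mult_mono) auto
          then show ?thesis using assms r1 by (intro divide_right_mono mult_left_mono) auto
        qed
        moreover have "\<rho> * (a * \<delta> powr \<rho> + \<eta>) / (\<rho>+1) \<le> \<epsilon>"
        proof -
          have "\<rho> * (a * \<delta> powr \<rho> + \<eta>) = \<rho> * a * \<delta> powr \<rho> + \<rho> * \<eta>" by (simp add: algebra_simps)
          also have "\<dots> \<le> \<epsilon> * (\<rho> + 1)"
          proof -
            have "\<epsilon>/2 \<le> \<epsilon>/2 * (\<rho>+1)" using assms by simp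
            have "\<rho> * \<eta> \<le> \<rho> * (\<epsilon>/4)" using \<eta>e assms by (intro mult_left_mono) auto
            moreover have "\<rho> * (\<epsilon>/4) \<le> \<epsilon>/2 * (\<rho>+1)" using assms by (simp add: algebra_simps)
            ultimately show ?thesis using d1 \<open>\<epsilon>/2 \<le> \<epsilon>/2 * (\<rho>+1)\<close> by (simp add: algebra_simps)
          qed
          finally show ?thesis using r1 by (simp add: pos_divide_le_eq)
        qed
        ultimately have "u * \<phi> w \<le> u * \<phi> u / (\<rho> + 1) + \<epsilon>" by linarith
        then show ?thesis
        proof -
          assume "u * \<phi> w \<le> u * \<phi> u / (\<rho> + 1) + \<epsilon>"
          moreover have "u * \<phi> u / (\<rho> + 1) \<le> (u * \<phi> u + \<rho> * (w * \<phi> w)) / (\<rho> + 1)"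
            using nn w assms r1 by (intro divide_right_mono) auto
          ultimately show ?thesis by linarith
        qed
      next
        case wge: False
        have ud: "u \<in> {\<delta>..1}" and wd: "w \<in> {\<delta>..1}" using uge wge u w by auto
        have upos: "u > 0" and wpos: "w > 0" using ud wd d2 by auto
        have cu: "a * u powr \<rho> \<le> \<phi> u + \<eta>" using cl ud by force
        have cw1: "a * w powr \<rho> \<le> \<phi> w + \<eta>" using cl wd by force
        have cw2: "\<phi> w \<le> a * w powr \<rho> + \<eta>" using cl wd by force
        have "u * \<phi> w \<le> u * (a * w powr \<rho> + \<eta>)" using cw2 u by (intro mult_left_mono) auto
        also have "\<dots> \<le> a * (u * w powr \<rho>) + \<eta>" using u \<open>\<eta> > 0\<close>
          by (simp add: algebra_simps mult_left_le_one_le)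
        also have "a * (u * w powr \<rho>) \<le> a * ((u powr (\<rho>+1) + \<rho> * w powr (\<rho>+1)) / (\<rho>+1))"
          using young_pow[of u w \<rho>] u w assms by (intro mult_left_mono) auto
        also have "\<dots> = (u * (a * u powr \<rho>) + \<rho> * (w * (a * w powr \<rho>))) / (\<rho>+1)"
          using upos wpos by (simp add: powr_add algebra_simps)
        also have "\<dots> \<le> (u * (\<phi> u + \<eta>) + \<rho> * (w * (\<phi> w + \<eta>))) / (\<rho>+1)"
          using u w assms cu cw1 r1
          by (intro divide_right_mono add_mono mult_left_mono) auto
        also have "\<dots> \<le> (u * \<phi> u + \<rho> * (w * \<phi> w)) / (\<rho>+1) + \<eta>"
        proof -
          have "u * (\<phi> u + \<eta>) + \<rho> * (w * (\<phi> w + \<eta>)) \<le> u * \<phi> u + \<rho> * (w * \<phi> w) + \<eta> * (\<rho>+1)"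
          proof -
            have "u * \<eta> \<le> \<eta>" "w * \<eta> \<le> \<eta>" using u w \<open>\<eta>>0\<close> by (auto simp: mult_left_le_one_le)
            then have "\<rho> * (w * \<eta>) \<le> \<rho> * \<eta>" using assms by (intro mult_left_mono) auto
            then show ?thesis using \<open>u * \<eta> \<le> \<eta>\<close> by (simp add: algebra_simps)
          qed
          then have "(u * (\<phi> u + \<eta>) + \<rho> * (w * (\<phi> w + \<eta>))) / (\<rho>+1) \<le> (u * \<phi> u + \<rho> * (w * \<phi> w) + \<eta> * (\<rho>+1)) / (\<rho>+1)"
            using r1 by (intro divide_right_mono) auto
          also have "\<dots> = (u * \<phi> u + \<rho> * (w * \<phi> w)) / (\<rho>+1) + \<eta>"
            using r1 by (simp add: add_divide_distrib)
          finally show ?thesis .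
        qed
        finally have "u * \<phi> w \<le> (u * \<phi> u + \<rho> * (w * \<phi> w)) / (\<rho> + 1) + \<eta> + \<eta>" by simp
        then show ?thesis using \<eta>e assms(1) by linarith
      qed
    qed
  qed
qed

lemma reroute_scaled:
  fixes a \<rho> \<epsilon> :: real
  assumes "\<epsilon> > 0" "a \<ge> 0" "\<rho> \<ge> 0"
  obtains \<delta> \<eta> d where "\<delta> > 0" "\<delta> \<le> 1/2" "\<eta> > 0" "\<eta> \<le> 1" "d > 0"
    "\<And>\<phi> u v. mono_on {0..1} \<phi> \<Longrightarrow> (\<forall>s\<in>{0..1}. \<phi> s \<ge> 0) \<Longrightarrow>
       (\<forall>s\<in>{\<delta>..1}. \<bar>\<phi> s - a * s powr \<rho>\<bar> \<le> \<eta>) \<Longrightarrow> 0 \<le> u \<Longrightarrow> u \<le> v \<Longrightarrow> v \<le> 1 \<Longrightarrow>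
       v - u \<le> d \<Longrightarrow> v * \<phi> v - u * \<phi> u \<le> \<epsilon>"
proof -
  define \<eta> where "\<eta> = min 1 (\<epsilon>/4)"
  define \<delta> where "\<delta> = min (1/2) (\<epsilon>/(4*(a+1)))"
  have dpos: "\<delta> > 0" using assms by (auto simp: \<delta>_def)
  have d12: "\<delta> \<le> 1/2" unfolding \<delta>_def by (rule min.cobounded1)
  have dle: "\<delta> * (a+1) \<le> \<epsilon>/4"
  proof -
    have "\<delta> \<le> \<epsilon>/(4*(a+1))" by (simp add: \<delta>_def)
    then have "\<delta> * (a+1) \<le> \<epsilon>/(4*(a+1)) * (a+1)" using assms by (intro mult_right_mono) auto
    also have "\<dots> = \<epsilon>/4" using assms by (simp add: field_simps)
    finally show ?thesis .
  qed
  have "continuous_on {\<delta>..1} (\<lambda>s. a * s powr (\<rho>+1))"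
    using dpos by (intro continuous_intros) auto
  then have "uniformly_continuous_on {\<delta>..1} (\<lambda>s. a * s powr (\<rho>+1))"
    by (intro compact_uniformly_continuous) auto
  then obtain d0 where d0: "d0 > 0" and
    ucont: "\<And>x x'. x \<in> {\<delta>..1} \<Longrightarrow> x' \<in> {\<delta>..1} \<Longrightarrow> dist x' x < d0 \<Longrightarrow>
      dist (a * x' powr (\<rho>+1)) (a * x powr (\<rho>+1)) < \<epsilon>/2"
    unfolding uniformly_continuous_on_def using assms by (meson half_gt_zero)
  define d where "d = min \<delta> (d0/2)"
  show ?thesis
  proof (rule that[of \<delta> \<eta> d])
    show "\<delta> > 0" "\<delta> \<le> 1/2" using dpos d12 by auto
    show "\<eta> > 0" "\<eta> \<le> 1" using assms by (auto simp: \<eta>_def)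
    show "d > 0" using dpos d0 by (auto simp: d_def)
    fix \<phi> :: "real \<Rightarrow> real" and u v :: real
    assume mono: "mono_on {0..1} \<phi>" and nn: "\<forall>s\<in>{0..1}. \<phi> s \<ge> 0"
      and cl: "\<forall>s\<in>{\<delta>..1}. \<bar>\<phi> s - a * s powr \<rho>\<bar> \<le> \<eta>" and uv: "0 \<le> u" "u \<le> v" "v \<le> 1" "v - u \<le> d"
    have \<eta>e: "\<eta> \<le> \<epsilon>/4" "\<eta> \<le> 1" by (auto simp: \<eta>_def)
    have phi1: "\<phi> 1 \<le> a + 1" using cl[rule_format, of 1] d12 \<eta>e by auto
    have phile: "\<phi> s \<le> a + 1" if "s \<in> {0..1}" for s
      using mono_onD[OF mono that, of 1] that phi1 by auto
    have unn: "u * \<phi> u \<ge> 0" using uv nn by auto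
    show "v * \<phi> v - u * \<phi> u \<le> \<epsilon>"
    proof (cases "u < \<delta>")
      case True
      have "v \<le> 2 * \<delta>" using True uv by (auto simp: d_def)
      then have "v * \<phi> v \<le> (2 * \<delta>) * (a + 1)"
        using uv nn phile[of v] by (intro mult_mono) auto
      then show ?thesis using dle unn assms by linarith
    next
      case False
      have ud: "u \<in> {\<delta>..1}" and vd: "v \<in> {\<delta>..1}" using False uv by auto
      have upos: "u > 0" and vpos: "v > 0" using ud vd dpos by auto
      have cu: "a * u powr \<rho> \<le> \<phi> u + \<eta>" using cl ud by force
      have cv: "\<phi> v \<le> a * v powr \<rho> + \<eta>" using cl vd by force
      have "v * \<phi> v \<le> v * (a * v powr \<rho> + \<eta>)" using cv uv by (intro mult_left_mono) auto
      also have "\<dots> = a * v powr (\<rho>+1) + v * \<eta>" using vpos by (simp add: powr_add algebra_simps)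
      finally have A: "v * \<phi> v \<le> a * v powr (\<rho>+1) + v * \<eta>" .
      have "a * u powr (\<rho>+1) = u * (a * u powr \<rho>)" using upos by (simp add: powr_add algebra_simps)
      also have "\<dots> \<le> u * (\<phi> u + \<eta>)" using cu uv by (intro mult_left_mono) auto
      finally have B: "a * u powr (\<rho>+1) \<le> u * \<phi> u + u * \<eta>" by (simp add: algebra_simps)
      have "dist v u < d0" using uv d0 by (auto simp: d_def dist_real_def)
      then have C: "a * v powr (\<rho>+1) - a * u powr (\<rho>+1) < \<epsilon>/2"
        using ucont[OF ud vd] unfolding dist_real_def by (smt (verit))
      have "v * \<eta> \<le> \<eta>" "u * \<eta> \<le> \<eta>" using uv \<open>\<eta> > 0\<close> by (auto simp: mult_left_le_one_le)
      then show ?thesis using A B C \<eta>e by linarith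
    qed
  qed
qed

lemma unif_mono_conv:
  fixes f :: "'a \<Rightarrow> real \<Rightarrow> real" and g :: "real \<Rightarrow> real" and \<delta> \<eta> :: real
  assumes d: "0 < \<delta>" "\<delta> < 1"
    and gc: "continuous_on {\<delta>..1} g"
    and lim: "\<And>s. s \<in> {\<delta>..1} \<Longrightarrow> ((\<lambda>n. f n s) \<longlongrightarrow> g s) F"
    and mono: "\<forall>\<^sub>F n in F. mono_on {\<delta>..1} (f n)"
    and eta: "\<eta> > 0"
  shows "\<forall>\<^sub>F n in F. \<forall>s\<in>{\<delta>..1}. \<bar>f n s - g s\<bar> \<le> \<eta>"
proof -
  have "uniformly_continuous_on {\<delta>..1} g" using gc by (intro compact_uniformly_continuous) auto
  then obtain dd where dd: "dd > 0" and
    uc: "\<And>x x'. x \<in> {\<delta>..1} \<Longrightarrow> x' \<in> {\<delta>..1} \<Longrightarrow> dist x' x < dd \<Longrightarrow> dist (g x') (g x) < \<eta>/2"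
    unfolding uniformly_continuous_on_def using eta by (meson half_gt_zero)
  obtain N :: nat where N: "(1-\<delta>)/dd < real N" using reals_Archimedean2 by blast
  have Npos: "real N > 0" using N d dd by (smt (verit) divide_pos_pos)
  define h where "h = (1-\<delta>)/N"
  have hpos: "h > 0" using d Npos by (simp add: h_def)
  have hdd: "h < dd" using N dd Npos d by (simp add: h_def field_simps)
  define t where "t k = \<delta> + real k * h" for k :: nat
  have tin: "t k \<in> {\<delta>..1}" if "k \<le> N" for k
  proof -
    have "real k * h \<le> real N * h" using that hpos by (intro mult_right_mono) auto
    also have "real N * h = 1 - \<delta>" using Npos by (simp add: h_def)
    finally show ?thesis using hpos by (auto simp: t_def)
  qed
  have "\<forall>\<^sub>F n in F. \<forall>k\<in>{..N}. \<bar>f n (t k) - g (t k)\<bar> < \<eta>/2"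
  proof (rule eventually_ball_finite)
    show "finite {..N}" by simp
    show "\<forall>k\<in>{..N}. \<forall>\<^sub>F n in F. \<bar>f n (t k) - g (t k)\<bar> < \<eta>/2"
    proof
      fix k assume "k \<in> {..N}"
      then have "((\<lambda>n. f n (t k)) \<longlongrightarrow> g (t k)) F" using lim tin by auto
      from tendstoD[OF this, of "\<eta>/2"] eta show "\<forall>\<^sub>F n in F. \<bar>f n (t k) - g (t k)\<bar> < \<eta>/2"
        by (simp add: dist_real_def)
    qed
  qed
  with mono show ?thesis
  proof eventually_elim
    case (elim n)
    note mn = elim(1) and gr = elim(2)
    show ?case
    proof
      fix s assume s: "s \<in> {\<delta>..1}"
      define q where "q = (s - \<delta>) / h"
      have q0: "q \<ge> 0" using s hpos by (simp add: q_def)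
      have qN: "q \<le> real N"
      proof -
        have "s - \<delta> \<le> 1 - \<delta>" using s by auto
        also have "1 - \<delta> = real N * h" using Npos by (simp add: h_def)
        finally show ?thesis using hpos by (simp add: q_def divide_le_eq mult.commute)
      qed
      have sq: "s = \<delta> + q * h" using hpos by (simp add: q_def)
      define k where "k = nat \<lfloor>q\<rfloor>"
      have kq: "real k \<le> q" "q < real k + 1" using q0 by (auto simp: k_def)
      have kN: "k \<le> N" using kq qN by linarith
      have tks: "t k \<le> s" using kq hpos sq by (simp add: t_def mult_right_mono)
      have low: "f n s \<ge> g s - \<eta>"
      proof -
        have "f n (t k) \<le> f n s" using mono_onD[OF mn tin[OF kN] s tks] .
        moreover have "\<bar>f n (t k) - g (t k)\<bar> < \<eta>/2" using gr kN by auto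
        moreover have "dist (t k) s < dd"
        proof -
          have "s - t k = (q - real k) * h" using sq by (simp add: t_def algebra_simps)
          also have "\<dots> \<le> 1 * h" using kq hpos by (intro mult_right_mono) auto
          finally show ?thesis using tks hdd by (simp add: dist_real_def)
        qed
        then have "dist (g (t k)) (g s) < \<eta>/2" using uc[OF s tin[OF kN]] by simp
        ultimately show ?thesis unfolding dist_real_def abs_less_iff by linarith
      qed
      have up: "f n s \<le> g s + \<eta>"
      proof (cases "k = N")
        case True
        then have "q = real N" using kq qN by linarith
        then have "s = t N" using sq by (simp add: t_def)
        moreover have "\<bar>f n (t N) - g (t N)\<bar> < \<eta>/2" using gr by auto
        ultimately show ?thesis using eta unfolding abs_less_iff by simp
      next
        case False
        then have k1: "Suc k \<le> N" using kN by auto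
        have "q * h \<le> (real k + 1) * h" using kq hpos by (intro mult_right_mono) auto
        then have stk: "s \<le> t (Suc k)" using sq by (simp add: t_def algebra_simps)
        have "f n s \<le> f n (t (Suc k))" using mono_onD[OF mn s tin[OF k1] stk] .
        moreover have "\<bar>f n (t (Suc k)) - g (t (Suc k))\<bar> < \<eta>/2" using gr k1 by auto
        moreover have "dist (t (Suc k)) s < dd"
        proof -
          have "t (Suc k) - s = (real k + 1 - q) * h" using sq by (simp add: t_def algebra_simps)
          also have "\<dots> \<le> 1 * h" using kq q0 hpos by (intro mult_right_mono) auto
          finally show ?thesis using stk hdd by (simp add: dist_real_def)
        qed
        then have "dist (g (t (Suc k))) (g s) < \<eta>/2" using uc[OF s tin[OF k1]] by simp
        ultimately show ?thesis unfolding dist_real_def abs_less_iff by linarith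
      qed
      show "\<bar>f n s - g s\<bar> \<le> \<eta>" using low up by linarith
    qed
  qed
qed

lemma mono_mult_power:
  fixes h :: "real \<Rightarrow> real"
  assumes pos: "\<And>x. x > 0 \<Longrightarrow> h x > 0"
    and mono: "\<And>x y. 0 < x \<Longrightarrow> x \<le> y \<Longrightarrow> h x \<le> h y"
    and mult: "\<And>x y. 0 < x \<Longrightarrow> 0 < y \<Longrightarrow> h (x * y) = h x * h y"
  obtains \<rho> where "\<rho> \<ge> 0" "\<And>x. x > 0 \<Longrightarrow> h x = x powr \<rho>"
proof -
  define G where "G s = ln (h (exp s))" for s
  have add: "G (a + b) = G a + G b" for a b
    using mult[of "exp a" "exp b"] pos[of "exp a"] pos[of "exp b"]
    by (simp add: G_def exp_add ln_mult)
  have Gmono: "G a \<le> G b" if "a \<le> b" for a b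
    using mono[of "exp a" "exp b"] that pos[of "exp a"] by (simp add: G_def)
  have "G 0 = G 0 + G 0" using add[of 0 0] by (simp only: add_0_left)
  then have G0: "G 0 = 0" by linarith
  have Gnat: "G (real n * a) = real n * G a" for n :: nat and a
    by (induction n) (auto simp: add distrib_right add.commute G0)
  have Gneg: "G (- a) = - G a" for a using add[of a "-a"] G0 by simp
  have Gint: "G (real_of_int k * a) = real_of_int k * G a" for k :: int and a
  proof (cases "k \<ge> 0")
    case True
    then show ?thesis using Gnat[of "nat k" a] by simp
  next
    case False
    then have "real_of_int k * a = - (real (nat (-k)) * a)" by simp
    then show ?thesis using Gnat[of "nat (-k)" a] Gneg False by simp
  qed
  define \<rho> where "\<rho> = G 1"
  have rho0: "\<rho> \<ge> 0" using Gmono[of 0 1] G0 by (simp add: \<rho>_def)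
  have lin: "G s = \<rho> * s" for s
  proof -
    have bound: "\<bar>G s - \<rho> * s\<bar> \<le> \<rho> / real n" if n: "n > 0" for n :: nat
    proof -
      define k where "k = \<lfloor>real n * s\<rfloor>"
      have k: "real_of_int k \<le> real n * s" "real n * s < real_of_int k + 1"
        by (auto simp: k_def)
      have "G (real_of_int k * 1) \<le> G (real n * s)" using k by (intro Gmono) simp
      then have l: "real_of_int k * \<rho> \<le> real n * G s" using Gint[of k 1] Gnat[of n s] by (simp add: \<rho>_def)
      have "G (real n * s) \<le> G (real_of_int (k+1) * 1)" using k by (intro Gmono) simp
      then have u: "real n * G s \<le> real_of_int (k+1) * \<rho>" using Gint[of "k+1" 1] Gnat[of n s] by (simp add: \<rho>_def)
      have "real_of_int k * \<rho> \<le> real n * s * \<rho>" "real n * s * \<rho> \<le> (real_of_int k + 1) * \<rho>"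
        using k rho0 by (auto intro: mult_right_mono)
      then have "\<bar>real n * G s - real n * (\<rho> * s)\<bar> \<le> \<rho>" using l u unfolding abs_le_iff by (simp add: algebra_simps)
      then have "real n * \<bar>G s - \<rho> * s\<bar> \<le> \<rho>" by (simp add: abs_mult right_diff_distrib[symmetric])
      then show ?thesis using n by (simp add: field_simps)
    qed
    have "\<bar>G s - \<rho> * s\<bar> \<le> 0"
    proof (rule field_le_epsilon)
      fix e :: real assume e: "e > 0"
      obtain n :: nat where n: "\<rho> / e < real n" using reals_Archimedean2 by blast
      then have npos: "n > 0" using rho0 e by (metis divide_nonneg_pos less_eq_real_def of_nat_0_less_iff order.strict_trans1)
      have "\<rho> / real n \<le> e" using n npos e by (simp add: field_simps)
      then show "\<bar>G s - \<rho> * s\<bar> \<le> 0 + e" using bound[OF npos] by simp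
    qed
    then show ?thesis by simp
  qed
  show ?thesis
  proof (rule that[OF rho0])
    fix x :: real assume x: "x > 0"
    have "ln (h x) = \<rho> * ln x" using lin[of "ln x"] x by (simp add: G_def)
    then have "h x = exp (\<rho> * ln x)" using pos[OF x] by (metis exp_ln)
    then show "h x = x powr \<rho>" using x by (simp add: powr_def mult.commute)
  qed
qed

lemma omega_facts:
  fixes F :: "real filter"
  assumes "F = at_right 0 \<or> F = at_top"
  shows omega_nontriv: "F \<noteq> bot" and omega_evpos: "eventually (\<lambda>t. t > 0) F"
    and omega_scale: "\<And>x. x > 0 \<Longrightarrow> filterlim (\<lambda>t. t * x) F F"
proof -
  show "F \<noteq> bot" using assms trivial_limit_at_right_real[of "0::real"] trivial_limit_at_top_linorder by (auto simp: trivial_limit_def)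
  show ev: "eventually (\<lambda>t. t > 0) F" using assms
    by (auto simp: eventually_at_right_less eventually_gt_at_top)
  fix x :: real assume x: "x > 0"
  show "filterlim (\<lambda>t. t * x) F F"
    using assms
  proof
    assume F: "F = at_right 0"
    have "((\<lambda>t. t * x) \<longlongrightarrow> 0 * x) (at_right 0)" by (intro tendsto_intros)
    moreover have "eventually (\<lambda>t. t * x > 0) (at_right (0::real))"
      using eventually_at_right_less[of "0::real"] by eventually_elim (use x in simp)
    ultimately show ?thesis unfolding F by (intro tendsto_imp_filterlim_at_right) auto
  next
    assume F: "F = at_top"
    have "filterlim (\<lambda>t. x * t) at_top at_top"
      by (rule filterlim_tendsto_pos_mult_at_top[OF tendsto_const x filterlim_ident])
    then show ?thesis unfolding F by (simp add: mult.commute)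
  qed
qed

locale bm =
  fixes F :: "real filter" and cb :: "real \<Rightarrow> real"
  assumes omega: "F = at_right 0 \<or> F = at_top" and rv: "regularly_varying F cb"
begin

lemma nontriv: "F \<noteq> bot" using omega_nontriv[OF omega] .
lemma evpos: "eventually (\<lambda>t. t > 0) F" using omega_evpos[OF omega] .
lemma scale: "x > 0 \<Longrightarrow> filterlim (\<lambda>t. t * x) F F" using omega_scale[OF omega] .
lemma cb_pos: "t > 0 \<Longrightarrow> cb t > 0" using rv by (auto simp: regularly_varying_def)

definition H where "H x = Lim F (\<lambda>t. cb (t * x) / cb t)"

lemma H_tendsto: assumes "x > 0" shows "((\<lambda>t. cb (t * x) / cb t) \<longlongrightarrow> H x) F"
proof -
  obtain L where "L \<noteq> 0" "((\<lambda>t. cb (t * x) / cb t) \<longlongrightarrow> L) F" using rv assms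
    unfolding regularly_varying_def by blast
  moreover have "H x = L" unfolding H_def using nontriv \<open>((\<lambda>t. cb (t * x) / cb t) \<longlongrightarrow> L) F\<close> by (intro tendsto_Lim) (auto simp: trivial_limit_def)
  ultimately show ?thesis by simp
qed

lemma H_pos: assumes "x > 0" shows "H x > 0"
proof -
  obtain L where L: "L \<noteq> 0" "((\<lambda>t. cb (t * x) / cb t) \<longlongrightarrow> L) F" using rv assms
    unfolding regularly_varying_def by blast
  then have HL: "H x = L" unfolding H_def using nontriv by (intro tendsto_Lim) (auto simp: trivial_limit_def)
  have "eventually (\<lambda>t. 0 \<le> cb (t * x) / cb t) F"
    using evpos
  proof eventually_elim
    case (elim t)
    then have "cb (t * x) > 0" "cb t > 0" using cb_pos assms by auto
    then show ?case by simp
  qed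
  then have "0 \<le> L" using L nontriv by (intro tendsto_lowerbound) auto
  then show ?thesis using L HL by auto
qed

lemma H_mult: assumes "x > 0" "y > 0" shows "H (x * y) = H x * H y"
proof -
  have "((\<lambda>t. cb ((t * x) * y) / cb (t * x)) \<longlongrightarrow> H y) F"
    using filterlim_compose[OF H_tendsto[OF assms(2)] scale[OF assms(1)]] by simp
  then have "((\<lambda>t. cb ((t * x) * y) / cb (t * x) * (cb (t * x) / cb t)) \<longlongrightarrow> H y * H x) F"
    using H_tendsto[OF assms(1)] by (intro tendsto_mult)
  moreover have "eventually (\<lambda>t. cb ((t * x) * y) / cb (t * x) * (cb (t * x) / cb t) = cb (t * (x * y)) / cb t) F"
    using evpos
  proof eventually_elim
    case (elim t)
    then have "cb (t * x) > 0" using cb_pos assms by simp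
    then show ?case by (simp add: mult.assoc)
  qed
  ultimately have A: "((\<lambda>t. cb (t * (x * y)) / cb t) \<longlongrightarrow> H y * H x) F"
    by (rule Lim_transform_eventually)
  have B: "((\<lambda>t. cb (t * (x * y)) / cb t) \<longlongrightarrow> H (x * y)) F"
    using assms by (intro H_tendsto) auto
  show ?thesis using tendsto_unique[OF nontriv B A] by (simp add: mult.commute)
qed

context
  fixes ce :: "real \<Rightarrow> real" and \<alpha> :: ereal
  assumes ce_mono: "mono_on {0..} ce" and ce_nn: "\<And>x. x \<ge> 0 \<Longrightarrow> ce x \<ge> 0"
    and ce_lim: "((\<lambda>x. ereal (ce x / cb x)) \<longlongrightarrow> \<alpha>) F"
begin

lemma alpha_nonneg: "\<alpha> \<ge> 0"
proof -
  have "eventually (\<lambda>t. 0 \<le> ereal (ce t / cb t)) F"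
    using evpos
  proof eventually_elim
    case (elim t)
    then have "ce t \<ge> 0" "cb t > 0" using cb_pos ce_nn by auto
    then show ?case by simp
  qed
  then show ?thesis using ce_lim nontriv by (intro tendsto_lowerbound) auto
qed

lemma edge_fin:
  assumes "\<alpha> = ereal a" "x > 0"
  shows "((\<lambda>t. ce (t * x) / cb t) \<longlongrightarrow> a * H x) F"
proof -
  have "((\<lambda>t. ce t / cb t) \<longlongrightarrow> a) F" using ce_lim assms by simp
  from filterlim_compose[OF this scale[OF assms(2)]]
  have "((\<lambda>t. ce (t * x) / cb (t * x)) \<longlongrightarrow> a) F" by simp
  then have "((\<lambda>t. ce (t * x) / cb (t * x) * (cb (t * x) / cb t)) \<longlongrightarrow> a * H x) F"
    using H_tendsto[OF assms(2)] by (intro tendsto_mult)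
  moreover have "eventually (\<lambda>t. ce (t * x) / cb (t * x) * (cb (t * x) / cb t) = ce (t * x) / cb t) F"
    using evpos
  proof eventually_elim
    case (elim t)
    then have "cb (t * x) > 0" using cb_pos assms by simp
    then show ?case by simp
  qed
  ultimately show ?thesis by (rule Lim_transform_eventually)
qed

lemma edge_inf:
  assumes "\<alpha> = \<infinity>" "x > 0"
  shows "eventually (\<lambda>t. ce (t * x) \<ge> K * cb t) F"
proof -
  define K' where "K' = 2 * max K 0 / H x"
  have Hx: "H x > 0" using H_pos[OF assms(2)] .
  have "eventually (\<lambda>t. ereal K' < ereal (ce t / cb t)) F"
    using ce_lim assms by (intro order_tendstoD(1)) auto
  from eventually_compose_filterlim[OF this scale[OF assms(2)]]
  have e1: "eventually (\<lambda>t. K' < ce (t * x) / cb (t * x)) F" by simp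
  have e2: "eventually (\<lambda>t. H x / 2 < cb (t * x) / cb t) F"
    using H_tendsto[OF assms(2)] Hx by (intro order_tendstoD(1)) auto
  have ev: "eventually (\<lambda>t. K' < ce (t * x) / cb (t * x) \<and> 0 < t \<and> H x / 2 < cb (t * x) / cb t) F"
    using e1 evpos e2 by (intro eventually_conj)
  show ?thesis
  proof (rule eventually_mono[OF ev])
    fix t assume elim: "K' < ce (t * x) / cb (t * x) \<and> 0 < t \<and> H x / 2 < cb (t * x) / cb t"
    have cbt: "cb t > 0" "cb (t * x) > 0" using cb_pos elim assms by auto
    have K'nn: "K' \<ge> 0" using Hx by (auto simp: K'_def)
    have q1: "K' < ce (t * x) / cb (t * x)" using elim by blast
    have a: "ce (t * x) \<ge> K' * cb (t * x)" using q1 cbt by (simp add: pos_less_divide_eq less_imp_le)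
    have q2: "H x / 2 < cb (t * x) / cb t" using elim by blast
    then have "H x / 2 * cb t < cb (t * x)" using cbt by (simp add: pos_less_divide_eq)
    then have b: "K' * (H x / 2 * cb t) \<le> K' * cb (t * x)" using K'nn by (intro mult_left_mono) auto
    have c: "K' * (H x / 2 * cb t) = max K 0 * cb t" using Hx by (simp add: K'_def)
    have d: "max K 0 * cb t \<ge> K * cb t" using cbt by (intro mult_right_mono) auto
    show "ce (t * x) \<ge> K * cb t" using a b c d by linarith
  qed
qed

lemma H_mono:
  assumes "\<alpha> = ereal a" "a > 0" "0 < x" "x \<le> y"
  shows "H x \<le> H y"
proof -
  have "eventually (\<lambda>t. ce (t * x) / cb t \<le> ce (t * y) / cb t) F"
    using evpos
  proof eventually_elim
    case (elim t)
    have "t * x \<le> t * y" using assms elim by (intro mult_left_mono) auto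
    moreover have "t * x \<ge> 0" using assms elim by simp
    ultimately have "ce (t * x) \<le> ce (t * y)"
      by (intro mono_onD[OF ce_mono]) auto
    moreover have "cb t > 0" using cb_pos elim by simp
    ultimately show ?case by (intro divide_right_mono) auto
  qed
  moreover have "0 < y" using assms by simp
  ultimately have "a * H x \<le> a * H y"
    using tendsto_le[OF _ edge_fin[OF assms(1), of y] edge_fin[OF assms(1) assms(3)]] nontriv
    by (simp add: trivial_limit_def)
  then show ?thesis using assms by simp
qed

lemma H_power:
  assumes "\<alpha> = ereal a" "a > 0"
  obtains \<rho> where "\<rho> \<ge> 0" "\<And>x. x > 0 \<Longrightarrow> H x = x powr \<rho>"
  using mono_mult_power[of H, OF H_pos H_mono[OF assms] H_mult] by blast

end

end

locale nw =
  fixes E :: "'e set" and src tgt :: "'e \<Rightarrow> 'v" and I :: "'i set"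
    and orig dest :: "'i \<Rightarrow> 'v" and P :: "'i \<Rightarrow> 'e list set"
    and c :: "'e \<Rightarrow> real \<Rightarrow> real"
  assumes net: "routing_network E src tgt I orig dest P"
    and costs: "admissible_costs E c"
begin

lemma finE: "finite E" using net by (simp add: routing_network_def)
lemma finI: "finite I" using net by (simp add: routing_network_def)
lemma finP: "i \<in> I \<Longrightarrow> finite (P i)" using net by (simp add: routing_network_def)
lemma P_ne: "i \<in> I \<Longrightarrow> P i \<noteq> {}" using net by (simp add: routing_network_def)
lemma path_E: "i \<in> I \<Longrightarrow> p \<in> P i \<Longrightarrow> set p \<subseteq> E"
  using net by (auto simp: routing_network_def is_path_def)
lemma disj: "i \<in> I \<Longrightarrow> j \<in> I \<Longrightarrow> i \<noteq> j \<Longrightarrow> P i \<inter> P j = {}"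
  using net by (simp add: routing_network_def)
lemma uniq: "i \<in> I \<Longrightarrow> j \<in> I \<Longrightarrow> p \<in> P i \<Longrightarrow> p \<in> P j \<Longrightarrow> i = j"
  using disj by blast
lemma AP_mem: "p \<in> all_paths I P \<longleftrightarrow> (\<exists>i\<in>I. p \<in> P i)"
  by (simp add: all_paths_def)
lemma finAP: "finite (all_paths I P)"
  unfolding all_paths_def using finI finP by auto
lemma AP_E: "p \<in> all_paths I P \<Longrightarrow> set p \<subseteq> E"
  using path_E by (auto simp: AP_mem)
lemma sumAP: "sum g (all_paths I P) = (\<Sum>i\<in>I. \<Sum>p\<in>P i. g p)"
  unfolding all_paths_def using finI finP disj by (intro sum.UNION_disjoint) auto

lemma feas_nonneg: "feasible I P d f \<Longrightarrow> p \<in> all_paths I P \<Longrightarrow> f p \<ge> 0"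
  by (simp add: feasible_def)

lemma load_nonneg: "feasible I P d f \<Longrightarrow> load I P f e \<ge> 0"
  unfolding load_def by (intro sum_nonneg) (auto simp: feasible_def)

lemma load_le: assumes "feasible I P d f" shows "load I P f e \<le> sum d I"
proof -
  have "load I P f e \<le> sum f (all_paths I P)"
    unfolding load_def using assms finAP by (intro sum_mono2) (auto simp: feasible_def)
  also have "\<dots> = sum d I" using assms by (simp add: sumAP feasible_def)
  finally show ?thesis .
qed

lemma cost_nn: "e \<in> E \<Longrightarrow> x \<ge> 0 \<Longrightarrow> c e x \<ge> 0"
  using costs by (simp add: admissible_costs_def)
lemma cost_mono: "e \<in> E \<Longrightarrow> 0 \<le> x \<Longrightarrow> x \<le> y \<Longrightarrow> c e x \<le> c e y"
  using costs unfolding admissible_costs_def by (meson atLeast_iff mono_onD order_trans)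
lemma cost_mono_on: "e \<in> E \<Longrightarrow> mono_on {0..} (c e)"
  using costs unfolding admissible_costs_def by blast
lemma prod_mono: "e \<in> E \<Longrightarrow> 0 \<le> x \<Longrightarrow> x \<le> y \<Longrightarrow> x * c e x \<le> y * c e y"
  using cost_mono[of e x y] cost_nn[of e x] by (intro mult_mono) auto

lemma sc_term_nn: "feasible I P d f \<Longrightarrow> e \<in> E \<Longrightarrow> 0 \<le> load I P f e * c e (load I P f e)"
  using load_nonneg cost_nn by auto
lemma sc_nonneg: "feasible I P d f \<Longrightarrow> 0 \<le> social_cost E c (load I P f)"
  unfolding social_cost_def using sc_term_nn by (intro sum_nonneg) auto
lemma sc_ge_term: "feasible I P d f \<Longrightarrow> e \<in> E \<Longrightarrow> load I P f e * c e (load I P f e) \<le> social_cost E c (load I P f)"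
  unfolding social_cost_def using sc_term_nn finE by (intro member_le_sum) auto

lemma dc: "(\<Sum>p\<in>all_paths I P. f p * path_cost c I P g p) = (\<Sum>e\<in>E. load I P f e * c e (load I P g e))"
proof -
  have "(\<Sum>p\<in>all_paths I P. f p * path_cost c I P g p)
      = (\<Sum>p\<in>all_paths I P. \<Sum>e\<in>E. if e \<in> set p then f p * c e (load I P g e) else 0)"
  proof (rule sum.cong)
    fix p assume p: "p \<in> all_paths I P"
    have "f p * path_cost c I P g p = (\<Sum>e\<in>set p. f p * c e (load I P g e))"
      by (simp add: path_cost_def sum_distrib_left)
    also have "\<dots> = (\<Sum>e\<in>E \<inter> set p. f p * c e (load I P g e))"
      using AP_E[OF p] by (simp add: Int_absorb1)
    also have "\<dots> = (\<Sum>e\<in>E. if e \<in> set p then f p * c e (load I P g e) else 0)"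
      using finE by (simp add: sum.inter_restrict)
    finally show "f p * path_cost c I P g p = (\<Sum>e\<in>E. if e \<in> set p then f p * c e (load I P g e) else 0)" .
  qed simp
  also have "\<dots> = (\<Sum>e\<in>E. \<Sum>p\<in>all_paths I P. if e \<in> set p then f p * c e (load I P g e) else 0)"
    by (rule sum.swap)
  also have "\<dots> = (\<Sum>e\<in>E. load I P f e * c e (load I P g e))"
  proof (rule sum.cong)
    fix e assume "e \<in> E"
    have "load I P f e * c e (load I P g e) = (\<Sum>p\<in>{p \<in> all_paths I P. e \<in> set p}. f p * c e (load I P g e))"
      by (simp add: load_def sum_distrib_right)
    also have "\<dots> = (\<Sum>p\<in>all_paths I P. if e \<in> set p then f p * c e (load I P g e) else 0)"
      using finAP by (simp add: sum.inter_filter)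
    finally show "(\<Sum>p\<in>all_paths I P. if e \<in> set p then f p * c e (load I P g e) else 0) = load I P f e * c e (load I P g e)" by simp
  qed simp
  finally show ?thesis .
qed

lemma vi:
  assumes w: "wardrop c I P d g" and f: "feasible I P d f"
  shows "social_cost E c (load I P g) \<le> (\<Sum>e\<in>E. load I P f e * c e (load I P g e))"
proof -
  have gf: "feasible I P d g" using w by (simp add: wardrop_def)
  have "social_cost E c (load I P g) = (\<Sum>p\<in>all_paths I P. g p * path_cost c I P g p)"
    by (simp add: dc social_cost_def)
  also have "\<dots> = (\<Sum>i\<in>I. \<Sum>p\<in>P i. g p * path_cost c I P g p)" by (rule sumAP)
  also have "\<dots> \<le> (\<Sum>i\<in>I. \<Sum>p\<in>P i. f p * path_cost c I P g p)"
  proof (rule sum_mono)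
    fix i assume i: "i \<in> I"
    define D where "D = Min (path_cost c I P g ` P i)"
    have Dle: "D \<le> path_cost c I P g p" if "p \<in> P i" for p
      using finP[OF i] that by (simp add: D_def)
    have Din: "D \<in> path_cost c I P g ` P i" using finP[OF i] P_ne[OF i] by (simp add: D_def)
    then obtain p0 where p0: "p0 \<in> P i" "path_cost c I P g p0 = D" by auto
    have pAP: "p \<in> all_paths I P" if "p \<in> P i" for p using that i by (auto simp: AP_mem)
    have "(\<Sum>p\<in>P i. g p * path_cost c I P g p) = (\<Sum>p\<in>P i. g p * D)"
    proof (rule sum.cong)
      fix p assume p: "p \<in> P i"
      show "g p * path_cost c I P g p = g p * D"
      proof (cases "g p > 0")
        case True
        then have "path_cost c I P g p \<le> path_cost c I P g p0" using w p p0 i by (auto simp: wardrop_def)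
        then show ?thesis using Dle[OF p] p0 by simp
      next
        case False
        then have "g p = 0" using feas_nonneg[OF gf pAP[OF p]] by simp
        then show ?thesis by simp
      qed
    qed simp
    also have "\<dots> = d i * D" using gf i by (simp add: feasible_def sum_distrib_right[symmetric])
    also have "\<dots> = (\<Sum>p\<in>P i. f p * D)" using f i by (simp add: feasible_def sum_distrib_right[symmetric])
    also have "\<dots> \<le> (\<Sum>p\<in>P i. f p * path_cost c I P g p)"
      using Dle feas_nonneg[OF f] pAP by (intro sum_mono mult_left_mono) auto
    finally show "(\<Sum>p\<in>P i. g p * path_cost c I P g p) \<le> (\<Sum>p\<in>P i. f p * path_cost c I P g p)" .
  qed
  also have "\<dots> = (\<Sum>p\<in>all_paths I P. f p * path_cost c I P g p)" by (rule sumAP[symmetric])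
  also have "\<dots> = (\<Sum>e\<in>E. load I P f e * c e (load I P g e))" by (rule dc)
  finally show ?thesis .
qed

end

locale nwq = nw +
  fixes \<alpha> :: "'e \<Rightarrow> ereal" and q :: "'i \<Rightarrow> 'e list"
  assumes q_in: "\<And>i. i \<in> I \<Longrightarrow> q i \<in> P i"
    and q_fin: "\<And>i e. i \<in> I \<Longrightarrow> e \<in> set (q i) \<Longrightarrow> \<alpha> e \<noteq> \<infinity>"
begin

definition bad :: "'e list \<Rightarrow> bool" where "bad p \<longleftrightarrow> (\<exists>e\<in>set p. \<alpha> e = \<infinity>)"
definition rsum :: "('e list \<Rightarrow> real) \<Rightarrow> 'i \<Rightarrow> real" where
  "rsum f i = (\<Sum>p\<in>{p\<in>P i. bad p}. f p)"
definition rr :: "('e list \<Rightarrow> real) \<Rightarrow> 'e list \<Rightarrow> real" where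
  "rr f p = (if bad p then 0 else f p) + (\<Sum>i\<in>I. if p = q i then rsum f i else 0)"

lemma q_notbad: "i \<in> I \<Longrightarrow> \<not> bad (q i)" using q_fin by (auto simp: bad_def)

lemma rsum_nn: assumes "feasible I P d f" "i \<in> I" shows "rsum f i \<ge> 0"
  unfolding rsum_def
proof (intro sum_nonneg)
  fix p assume "p \<in> {p \<in> P i. bad p}"
  then have "p \<in> all_paths I P" using assms(2) by (auto simp: AP_mem)
  then show "f p \<ge> 0" using feas_nonneg[OF assms(1)] by blast
qed

lemma rr_inner: "j \<in> I \<Longrightarrow> (\<Sum>p\<in>P j. \<Sum>i\<in>I. if p = q i then r i else 0) = r j"
proof -
  assume j: "j \<in> I"
  have "(\<Sum>p\<in>P j. \<Sum>i\<in>I. if p = q i then r i else 0) = (\<Sum>i\<in>I. \<Sum>p\<in>P j. if p = q i then r i else 0)"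
    by (rule sum.swap)
  also have "\<dots> = (\<Sum>i\<in>I. if i = j then r i else 0)"
  proof (rule sum.cong)
    fix i assume i: "i \<in> I"
    have "(\<Sum>p\<in>P j. if p = q i then r i else 0) = (if q i \<in> P j then r i else 0)"
      using finP[OF j] by (simp add: sum.delta')
    also have "\<dots> = (if i = j then r i else 0)" using uniq[OF i j q_in[OF i]] q_in[OF j] by auto
    finally show "(\<Sum>p\<in>P j. if p = q i then r i else 0) = (if i = j then r i else 0)" .
  qed simp
  also have "\<dots> = r j" using j finI by (simp add: sum.delta')
  finally show ?thesis .
qed

lemma rr_feasible:
  assumes f: "feasible I P d f"
  shows "feasible I P d (rr f)"
  unfolding feasible_def
proof safe
  fix p assume p: "p \<in> all_paths I P"
  show "0 \<le> rr f p" unfolding rr_def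
    using feas_nonneg[OF f p] rsum_nn[OF f] by (intro add_nonneg_nonneg sum_nonneg) auto
next
  fix i assume i: "i \<in> I"
  have "(\<Sum>p\<in>P i. rr f p) = (\<Sum>p\<in>P i. if bad p then 0 else f p) + (\<Sum>p\<in>P i. \<Sum>j\<in>I. if p = q j then rsum f j else 0)"
    unfolding rr_def by (simp add: sum.distrib)
  also have "(\<Sum>p\<in>P i. \<Sum>j\<in>I. if p = q j then rsum f j else 0) = rsum f i" by (rule rr_inner[OF i])
  also have "(\<Sum>p\<in>P i. if bad p then 0 else f p) = (\<Sum>p\<in>P i. f p) - rsum f i"
  proof -
    have "(\<Sum>p\<in>P i. f p) = (\<Sum>p\<in>P i. if bad p then f p else 0) + (\<Sum>p\<in>P i. if bad p then 0 else f p)"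
      by (simp add: sum.distrib[symmetric] if_distrib cong: if_cong)
    moreover have "(\<Sum>p\<in>P i. if bad p then f p else 0) = rsum f i"
      unfolding rsum_def using finP[OF i] by (simp add: sum.inter_filter)
    ultimately show ?thesis by simp
  qed
  finally show "(\<Sum>p\<in>P i. rr f p) = d i" using f i by (simp add: feasible_def)
qed

lemma rr_load_inf:
  assumes "\<alpha> e = \<infinity>"
  shows "load I P (rr f) e = 0"
  unfolding load_def
proof (rule sum.neutral, safe)
  fix p assume p: "p \<in> all_paths I P" "e \<in> set p"
  then have b: "bad p" using assms by (auto simp: bad_def)
  have "p \<noteq> q i" if "i \<in> I" for i using q_notbad[OF that] b by auto
  then show "rr f p = 0" unfolding rr_def using b by simp
qed

lemma rr_load_le:
  assumes f: "feasible I P d f"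
  shows "load I P (rr f) e \<le> load I P f e + (\<Sum>e'\<in>{e'\<in>E. \<alpha> e' = \<infinity>}. load I P f e')"
proof -
  define A where "A = {p \<in> all_paths I P. e \<in> set p}"
  have finA: "finite A" using finAP by (simp add: A_def)
  have AAP: "A \<subseteq> all_paths I P" by (auto simp: A_def)
  have "load I P (rr f) e = (\<Sum>p\<in>A. if bad p then 0 else f p) + (\<Sum>p\<in>A. \<Sum>i\<in>I. if p = q i then rsum f i else 0)"
    unfolding load_def A_def[symmetric] rr_def by (simp add: sum.distrib)
  also have "(\<Sum>p\<in>A. if bad p then 0 else f p) \<le> (\<Sum>p\<in>A. f p)"
    using feas_nonneg[OF f] AAP by (intro sum_mono) auto
  also have "(\<Sum>p\<in>A. f p) = load I P f e" by (simp add: load_def A_def)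
  also have "(\<Sum>p\<in>A. \<Sum>i\<in>I. if p = q i then rsum f i else 0) \<le> (\<Sum>p\<in>all_paths I P. \<Sum>i\<in>I. if p = q i then rsum f i else 0)"
    using finAP AAP rsum_nn[OF f] by (intro sum_mono2 sum_nonneg) auto
  also have "\<dots> = (\<Sum>i\<in>I. \<Sum>j\<in>P i. \<Sum>i'\<in>I. if j = q i' then rsum f i' else 0)" by (rule sumAP)
  also have "\<dots> = (\<Sum>i\<in>I. rsum f i)" using rr_inner by (intro sum.cong) auto
  also have "(\<Sum>i\<in>I. rsum f i) \<le> (\<Sum>e'\<in>{e'\<in>E. \<alpha> e' = \<infinity>}. load I P f e')"
  proof -
    define Ei where "Ei = {e'\<in>E. \<alpha> e' = \<infinity>}"
    have finEi: "finite Ei" using finE by (simp add: Ei_def)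
    have "(\<Sum>i\<in>I. rsum f i) = (\<Sum>i\<in>I. \<Sum>p\<in>P i. if bad p then f p else 0)"
      unfolding rsum_def by (rule sum.cong[OF refl]) (simp add: finP sum.inter_filter)
    also have "\<dots> = (\<Sum>p\<in>all_paths I P. if bad p then f p else 0)" by (rule sumAP[symmetric])
    also have "\<dots> \<le> (\<Sum>p\<in>all_paths I P. \<Sum>e'\<in>Ei. if e' \<in> set p then f p else 0)"
    proof (rule sum_mono)
      fix p assume p: "p \<in> all_paths I P"
      have fp: "f p \<ge> 0" using feas_nonneg[OF f p] .
      show "(if bad p then f p else 0) \<le> (\<Sum>e'\<in>Ei. if e' \<in> set p then f p else 0)"
      proof (cases "bad p")
        case True
        then obtain e' where e': "e' \<in> set p" "\<alpha> e' = \<infinity>" by (auto simp: bad_def)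
        then have "e' \<in> Ei" using AP_E[OF p] by (auto simp: Ei_def)
        then have "(if e' \<in> set p then f p else 0) \<le> (\<Sum>e'\<in>Ei. if e' \<in> set p then f p else 0)"
          using finEi fp by (intro member_le_sum) auto
        then show ?thesis using True e' by simp
      next
        case False
        then show ?thesis using fp by (auto intro!: sum_nonneg)
      qed
    qed
    also have "\<dots> = (\<Sum>e'\<in>Ei. \<Sum>p\<in>all_paths I P. if e' \<in> set p then f p else 0)" by (rule sum.swap)
    also have "\<dots> = (\<Sum>e'\<in>Ei. load I P f e')"
      unfolding load_def by (rule sum.cong[OF refl]) (simp add: finAP sum.inter_filter)
    finally show ?thesis by (simp add: Ei_def)
  qed
  finally show ?thesis by simp
qed

end

context nwq
begin

lemma opt_le: "feasible I P d f \<Longrightarrow> opt_cost E c I P d \<le> social_cost E c (load I P f)"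
  unfolding opt_cost_def
  by (rule cInf_lower) (auto intro!: bdd_belowI[of _ 0] sc_nonneg)

lemma opt_ge: "feasible I P d f0 \<Longrightarrow> (\<And>f. feasible I P d f \<Longrightarrow> L \<le> social_cost E c (load I P f))
   \<Longrightarrow> L \<le> opt_cost E c I P d"
  unfolding opt_cost_def by (rule cInf_greatest) auto

lemma opt_near:
  assumes "feasible I P d f0" "z > opt_cost E c I P d"
  obtains f where "feasible I P d f" "social_cost E c (load I P f) < z"
proof -
  have "{social_cost E c (load I P f) |f. feasible I P d f} \<noteq> {}" using assms(1) by auto
  from cInf_lessD[OF this] assms(2) show ?thesis using that unfolding opt_cost_def by auto
qed

lemma step:
  fixes d :: "'i \<Rightarrow> real" and g :: "'e list \<Rightarrow> real" and Mn k \<rho> \<epsilon>1 C \<delta>' dd :: real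
  assumes w: "wardrop c I P d g"
    and Mn: "Mn = sum d I" "Mn > 0" and k: "k > 0"
    and rho: "\<rho> \<ge> 0" and eps: "\<epsilon>1 > 0" and eps1: "\<epsilon>1 \<le> 1" and C: "C \<ge> 0"
    and opt: "opt_cost E c I P d \<le> C * (Mn * k)"
    and dpos: "\<delta>' > 0" "real (card E) * \<delta>' \<le> dd"
    and Y: "\<And>e u w. e \<in> E \<Longrightarrow> \<alpha> e \<noteq> \<infinity> \<Longrightarrow> 0 \<le> u \<Longrightarrow> u \<le> Mn \<Longrightarrow> 0 \<le> w \<Longrightarrow> w \<le> Mn \<Longrightarrow>
        u * c e w \<le> (u * c e u + \<rho> * (w * c e w)) / (\<rho>+1) + \<epsilon>1 * (Mn * k)"
    and R: "\<And>e u v. e \<in> E \<Longrightarrow> \<alpha> e \<noteq> \<infinity> \<Longrightarrow> 0 \<le> u \<Longrightarrow> u \<le> v \<Longrightarrow> v \<le> Mn \<Longrightarrow> v - u \<le> dd * Mn \<Longrightarrow>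
        v * c e v - u * c e u \<le> \<epsilon>1 * (Mn * k)"
    and Inf: "\<And>e. e \<in> E \<Longrightarrow> \<alpha> e = \<infinity> \<Longrightarrow> c e (Mn * \<delta>') \<ge> (C+2)/\<delta>' * k"
  shows "social_cost E c (load I P g) \<le> opt_cost E c I P d + (1 + real (card E) + (\<rho>+1) * real (card E)) * \<epsilon>1 * (Mn * k)"
proof -
  define B where "B = Mn * k"
  have Bpos: "B > 0" using Mn k by (simp add: B_def)
  define nE where "nE = real (card E)"
  have gf: "feasible I P d g" using w by (simp add: wardrop_def)
  obtain f where f: "feasible I P d f" and fopt: "social_cost E c (load I P f) < opt_cost E c I P d + \<epsilon>1 * B"
    using opt_near[OF gf, of "opt_cost E c I P d + \<epsilon>1 * B"] eps Bpos by auto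
  define x where "x = load I P f"
  have SCf: "social_cost E c x \<le> (C+1) * B"
  proof -
    have "\<epsilon>1 * B \<le> 1 * B" using eps1 Bpos by (intro mult_right_mono) auto
    moreover have "social_cost E c x < C * B + \<epsilon>1 * B" using fopt opt by (simp add: x_def B_def)
    ultimately show ?thesis by (simp add: algebra_simps)
  qed
  have xnn: "x e \<ge> 0" for e using load_nonneg[OF f] by (simp add: x_def)
  have xle: "x e \<le> Mn" for e using load_le[OF f] Mn by (simp add: x_def)
  have small: "x e \<le> Mn * \<delta>'" if e: "e \<in> E" "\<alpha> e = \<infinity>" for e
  proof (rule ccontr)
    assume "\<not> x e \<le> Mn * \<delta>'"
    then have gt: "x e > Mn * \<delta>'" by simp
    have "c e (Mn * \<delta>') \<le> c e (x e)" using gt Mn dpos by (intro cost_mono[OF e(1)]) auto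
    then have ce: "(C+2)/\<delta>' * k \<le> c e (x e)" using Inf[OF e] by linarith
    have "(Mn * \<delta>') * ((C+2)/\<delta>' * k) \<le> x e * c e (x e)"
      using gt ce Mn dpos C k xnn[of e] by (intro mult_mono) auto
    moreover have "(Mn * \<delta>') * ((C+2)/\<delta>' * k) = (C+2) * B" using dpos by (simp add: B_def field_simps)
    moreover have "x e * c e (x e) \<le> social_cost E c x" using sc_ge_term[OF f e(1)] by (simp add: x_def)
    ultimately show False using SCf Bpos by (simp add: algebra_simps)
  qed
  define Rs where "Rs = (\<Sum>e'\<in>{e'\<in>E. \<alpha> e' = \<infinity>}. x e')"
  have Rs: "Rs \<le> dd * Mn"
  proof -
    have "Rs \<le> real (card {e'\<in>E. \<alpha> e' = \<infinity>}) * (Mn * \<delta>')"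
      unfolding Rs_def using small by (intro sum_bounded_above) auto
    also have "\<dots> \<le> nE * (Mn * \<delta>')"
      using finE Mn dpos by (intro mult_right_mono) (auto simp: nE_def intro!: card_mono)
    also have "\<dots> = (nE * \<delta>') * Mn" by simp
    also have "\<dots> \<le> dd * Mn" using dpos Mn by (intro mult_right_mono) (auto simp: nE_def)
    finally show ?thesis .
  qed
  define f' where "f' = rr f"
  have f': "feasible I P d f'" using rr_feasible[OF f] by (simp add: f'_def)
  define x' where "x' = load I P f'"
  have x'nn: "x' e \<ge> 0" for e using load_nonneg[OF f'] by (simp add: x'_def)
  have x'le: "x' e \<le> Mn" for e using load_le[OF f'] Mn by (simp add: x'_def)
  have x'inf: "x' e = 0" if "\<alpha> e = \<infinity>" for e using rr_load_inf[OF that] by (simp add: x'_def f'_def)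
  have x'x: "x' e \<le> x e + Rs" for e using rr_load_le[OF f, of e] by (simp add: x'_def f'_def x_def Rs_def)
  define xs where "xs = load I P g"
  have xsnn: "xs e \<ge> 0" for e using load_nonneg[OF gf] by (simp add: xs_def)
  have xsle: "xs e \<le> Mn" for e using load_le[OF gf] Mn by (simp add: xs_def)
  have SCf': "social_cost E c x' \<le> social_cost E c x + nE * (\<epsilon>1 * B)"
  proof -
    have "social_cost E c x' \<le> (\<Sum>e\<in>E. x e * c e (x e) + \<epsilon>1 * B)"
      unfolding social_cost_def
    proof (rule sum_mono)
      fix e assume e: "e \<in> E"
      show "x' e * c e (x' e) \<le> x e * c e (x e) + \<epsilon>1 * B"
      proof (cases "\<alpha> e = \<infinity>")
        case True
        then have "x' e * c e (x' e) = 0" using x'inf by simp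
        moreover have "0 \<le> x e * c e (x e)" using xnn cost_nn[OF e] by simp
        moreover have "0 < \<epsilon>1 * B" using eps Bpos by simp
        ultimately show ?thesis by linarith
      next
        case False
        show ?thesis
        proof (cases "x' e \<le> x e")
          case True
          then have "x' e * c e (x' e) \<le> x e * c e (x e)" using prod_mono[OF e x'nn] by simp
          moreover have "0 < \<epsilon>1 * B" using eps Bpos by simp
          ultimately show ?thesis by linarith
        next
          case nle: False
          have "x' e * c e (x' e) - x e * c e (x e) \<le> \<epsilon>1 * (Mn * k)"
          proof (rule R[OF e False xnn[of e]])
            show "x e \<le> x' e" using nle by simp
            show "x' e \<le> Mn" by (rule x'le)
            show "x' e - x e \<le> dd * Mn" using x'x[of e] Rs by simp
          qed
          then show ?thesis by (simp add: B_def)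
        qed
      qed
    qed
    also have "\<dots> = social_cost E c x + nE * (\<epsilon>1 * B)"
      by (simp add: social_cost_def sum.distrib nE_def)
    finally show ?thesis .
  qed
  have VI: "social_cost E c xs \<le> (\<Sum>e\<in>E. x' e * c e (xs e))"
    using vi[OF w f'] by (simp add: xs_def x'_def)
  also have "\<dots> \<le> (\<Sum>e\<in>E. (x' e * c e (x' e) + \<rho> * (xs e * c e (xs e))) / (\<rho>+1) + \<epsilon>1 * B)"
  proof (rule sum_mono)
    fix e assume e: "e \<in> E"
    show "x' e * c e (xs e) \<le> (x' e * c e (x' e) + \<rho> * (xs e * c e (xs e))) / (\<rho>+1) + \<epsilon>1 * B"
    proof (cases "\<alpha> e = \<infinity>")
      case True
      then have "x' e * c e (xs e) = 0" using x'inf by simp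
      moreover have "0 \<le> (x' e * c e (x' e) + \<rho> * (xs e * c e (xs e))) / (\<rho>+1)"
        using x'nn xsnn cost_nn[OF e] rho by (intro divide_nonneg_pos add_nonneg_nonneg mult_nonneg_nonneg) auto
      moreover have "0 < \<epsilon>1 * B" using eps Bpos by simp
      ultimately show ?thesis by linarith
    next
      case False
      show ?thesis using Y[OF e False x'nn[of e] x'le[of e] xsnn[of e] xsle[of e]] by (simp add: B_def)
    qed
  qed
  also have "\<dots> = (social_cost E c x' + \<rho> * social_cost E c xs) / (\<rho>+1) + nE * (\<epsilon>1 * B)"
    by (simp add: social_cost_def sum.distrib sum_divide_distrib[symmetric] sum_distrib_left nE_def)
  finally have main: "social_cost E c xs \<le> (social_cost E c x' + \<rho> * social_cost E c xs) / (\<rho>+1) + nE * (\<epsilon>1 * B)" .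
  have main2: "social_cost E c xs \<le> social_cost E c x' + (\<rho>+1) * (nE * (\<epsilon>1 * B))"
  proof -
    have r1: "\<rho> + 1 > 0" using rho by simp
    from main have "(\<rho>+1) * social_cost E c xs \<le> (\<rho>+1) * ((social_cost E c x' + \<rho> * social_cost E c xs) / (\<rho>+1) + nE * (\<epsilon>1 * B))"
      using r1 by (intro mult_left_mono) auto
    also have "\<dots> = social_cost E c x' + \<rho> * social_cost E c xs + (\<rho>+1) * (nE * (\<epsilon>1 * B))"
    proof -
      have "(\<rho>+1) * ((social_cost E c x' + \<rho> * social_cost E c xs) / (\<rho>+1)) = social_cost E c x' + \<rho> * social_cost E c xs"
        using r1 by simp
      then show ?thesis by (simp add: distrib_left del: times_divide_eq_right)
    qed
    finally show ?thesis by (simp add: algebra_simps)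
  qed
  have "social_cost E c xs < opt_cost E c I P d + \<epsilon>1 * B + nE * (\<epsilon>1 * B) + (\<rho>+1) * (nE * (\<epsilon>1 * B))"
    using main2 SCf' fopt by (simp add: x_def)
  then show ?thesis by (simp add: xs_def B_def nE_def algebra_simps)
qed

end

lemma od_alpha_attained:
  assumes "finite (P i)" "P i \<noteq> {}"
  shows "\<exists>p\<in>P i. max 0 (SUP e\<in>set p. \<alpha> e) = od_alpha P \<alpha> i"
proof -
  have "od_alpha P \<alpha> i = Min ((\<lambda>p. max 0 (SUP e\<in>set p. \<alpha> e)) ` P i)"
    unfolding od_alpha_def using assms by (intro cInf_eq_Min) auto
  moreover have "Min ((\<lambda>p. max 0 (SUP e\<in>set p. \<alpha> e)) ` P i) \<in> (\<lambda>p. max 0 (SUP e\<in>set p. \<alpha> e)) ` P i"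
    using assms by (intro Min_in) auto
  ultimately show ?thesis by auto
qed

lemma od_alpha_le: "p \<in> P i \<Longrightarrow> od_alpha P \<alpha> i \<le> max 0 (SUP e\<in>set p. \<alpha> e)"
  unfolding od_alpha_def by (rule INF_lower)

lemma sup_attained:
  fixes \<alpha> :: "'e \<Rightarrow> ereal"
  assumes "0 < s" "s \<le> max 0 (SUP e\<in>set p. \<alpha> e)"
  shows "\<exists>e\<in>set p. s \<le> \<alpha> e"
proof (cases "set p = {}")
  case True
  then have "max 0 (SUP e\<in>set p. \<alpha> e) = 0" by (simp add: bot_ereal_def)
  then show ?thesis using assms by simp
next
  case False
  have eq: "(SUP e\<in>set p. \<alpha> e) = Max (\<alpha> ` set p)" using False by (intro cSup_eq_Max) auto
  have "Max (\<alpha> ` set p) \<in> \<alpha> ` set p" using False by (intro Max_in) auto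
  then obtain e where e: "e \<in> set p" "\<alpha> e = (SUP e\<in>set p. \<alpha> e)" using eq by auto
  have "s \<le> (SUP e\<in>set p. \<alpha> e)"
  proof (rule ccontr)
    assume "\<not> s \<le> (SUP e\<in>set p. \<alpha> e)"
    then have "max 0 (SUP e\<in>set p. \<alpha> e) < s" using assms(1) by (auto simp: max_def not_le)
    then show False using assms(2) by (simp add: not_le[symmetric])
  qed
  then have "s \<le> \<alpha> e" using e(2) by simp
  then show ?thesis using e(1) by blast
qed

lemma sup_le: "e \<in> set p \<Longrightarrow> (\<alpha> e :: ereal) \<le> max 0 (SUP e\<in>set p. \<alpha> e)"
  by (meson SUP_upper max.coboundedI2)

definition YP :: "real \<Rightarrow> real \<Rightarrow> real \<Rightarrow> real \<Rightarrow> real \<Rightarrow> bool" where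
  "YP a \<rho> \<epsilon> \<delta> \<eta> \<longleftrightarrow> (\<forall>\<phi> u w. mono_on {0..1} \<phi> \<longrightarrow> (\<forall>s\<in>{0..1}. \<phi> s \<ge> 0) \<longrightarrow>
       (\<forall>s\<in>{\<delta>..1}. \<bar>\<phi> s - a * s powr \<rho>\<bar> \<le> \<eta>) \<longrightarrow> u \<in> {0..1} \<longrightarrow> w \<in> {0..1} \<longrightarrow>
       u * \<phi> w \<le> (u * \<phi> u + \<rho> * (w * \<phi> w)) / (\<rho>+1) + \<epsilon>)"

definition RP :: "real \<Rightarrow> real \<Rightarrow> real \<Rightarrow> real \<Rightarrow> real \<Rightarrow> real \<Rightarrow> bool" where
  "RP a \<rho> \<epsilon> \<delta> \<eta> d \<longleftrightarrow> (\<forall>\<phi> u v. mono_on {0..1} \<phi> \<longrightarrow> (\<forall>s\<in>{0..1}. \<phi> s \<ge> 0) \<longrightarrow>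
       (\<forall>s\<in>{\<delta>..1}. \<bar>\<phi> s - a * s powr \<rho>\<bar> \<le> \<eta>) \<longrightarrow> 0 \<le> u \<longrightarrow> u \<le> v \<longrightarrow> v \<le> 1 \<longrightarrow>
       v - u \<le> d \<longrightarrow> v * \<phi> v - u * \<phi> u \<le> \<epsilon>)"

lemma YP_ex: "\<epsilon> > 0 \<Longrightarrow> a \<ge> 0 \<Longrightarrow> \<rho> \<ge> 0 \<Longrightarrow> \<exists>\<delta> \<eta>. \<delta> > 0 \<and> \<delta> \<le> 1/2 \<and> \<eta> > 0 \<and> YP a \<rho> \<epsilon> \<delta> \<eta>"
proof -
  assume as: "\<epsilon> > 0" "a \<ge> 0" "\<rho> \<ge> 0"
  show ?thesis
  proof (rule young_scaled[OF as])
    fix \<delta> \<eta> :: real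
    assume h: "\<delta> > 0" "\<delta> \<le> 1/2" "\<eta> > 0" "\<eta> \<le> 1"
      "\<And>\<phi> u w. mono_on {0..1} \<phi> \<Longrightarrow> (\<forall>s\<in>{0..1}. \<phi> s \<ge> 0) \<Longrightarrow>
       (\<forall>s\<in>{\<delta>..1}. \<bar>\<phi> s - a * s powr \<rho>\<bar> \<le> \<eta>) \<Longrightarrow> u \<in> {0..1} \<Longrightarrow> w \<in> {0..1} \<Longrightarrow>
       u * \<phi> w \<le> (u * \<phi> u + \<rho> * (w * \<phi> w)) / (\<rho>+1) + \<epsilon>"
    have "YP a \<rho> \<epsilon> \<delta> \<eta>" unfolding YP_def using h(5) by blast
    then show ?thesis using h(1-3) by blast
  qed
qed

lemma RP_ex: "\<epsilon> > 0 \<Longrightarrow> a \<ge> 0 \<Longrightarrow> \<rho> \<ge> 0 \<Longrightarrow> \<exists>\<delta> \<eta> d. \<delta> > 0 \<and> \<delta> \<le> 1/2 \<and> \<eta> > 0 \<and> d > 0 \<and> RP a \<rho> \<epsilon> \<delta> \<eta> d"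
proof -
  assume as: "\<epsilon> > 0" "a \<ge> 0" "\<rho> \<ge> 0"
  show ?thesis
  proof (rule reroute_scaled[OF as])
    fix \<delta> \<eta> d :: real
    assume h: "\<delta> > 0" "\<delta> \<le> 1/2" "\<eta> > 0" "\<eta> \<le> 1" "d > 0"
    "\<And>\<phi> u v. mono_on {0..1} \<phi> \<Longrightarrow> (\<forall>s\<in>{0..1}. \<phi> s \<ge> 0) \<Longrightarrow>
       (\<forall>s\<in>{\<delta>..1}. \<bar>\<phi> s - a * s powr \<rho>\<bar> \<le> \<eta>) \<Longrightarrow> 0 \<le> u \<Longrightarrow> u \<le> v \<Longrightarrow> v \<le> 1 \<Longrightarrow>
       v - u \<le> d \<Longrightarrow> v * \<phi> v - u * \<phi> u \<le> \<epsilon>"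
    have "RP a \<rho> \<epsilon> \<delta> \<eta> d" unfolding RP_def using h(6) by blast
    then show ?thesis using h(1-3,5) by blast
  qed
qed

lemma scale_young:
  fixes ce :: "real \<Rightarrow> real"
  assumes Mk: "Mn > 0" "k > 0" and Y: "YP a \<rho> \<epsilon> \<delta> \<eta>"
    and mono: "mono_on {0..1} (\<lambda>s. ce (Mn * s) / k)" and nn: "\<forall>s\<in>{0..1}. ce (Mn * s) / k \<ge> 0"
    and cl: "\<forall>s\<in>{\<delta>..1}. \<bar>ce (Mn * s) / k - a * s powr \<rho>\<bar> \<le> \<eta>"
    and uw: "0 \<le> u" "u \<le> Mn" "0 \<le> w" "w \<le> Mn" and rho: "\<rho> \<ge> 0"
  shows "u * ce w \<le> (u * ce u + \<rho> * (w * ce w)) / (\<rho>+1) + \<epsilon> * (Mn * k)"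
proof -
  have "u/Mn \<in> {0..1}" "w/Mn \<in> {0..1}" using uw Mk by auto
  from Y[unfolded YP_def, rule_format, OF mono nn[rule_format] cl[rule_format] this]
  have "u/Mn * (ce (Mn * (w/Mn)) / k) \<le> (u/Mn * (ce (Mn * (u/Mn)) / k) + \<rho> * (w/Mn * (ce (Mn * (w/Mn)) / k))) / (\<rho>+1) + \<epsilon>" .
  then have "(u * ce w) / (Mn * k) \<le> ((u * ce u + \<rho> * (w * ce w)) / (\<rho>+1)) / (Mn * k) + \<epsilon>"
    using Mk by (simp add: field_simps)
  then have "(u * ce w) / (Mn * k) \<le> ((u * ce u + \<rho> * (w * ce w)) / (\<rho>+1) + \<epsilon> * (Mn * k)) / (Mn * k)"
    using Mk by (simp add: add_divide_distrib)
  then show ?thesis using Mk by (simp add: divide_le_cancel)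
qed

lemma scale_reroute:
  fixes ce :: "real \<Rightarrow> real"
  assumes Mk: "Mn > 0" "k > 0" and R: "RP a \<rho> \<epsilon> \<delta> \<eta> d"
    and mono: "mono_on {0..1} (\<lambda>s. ce (Mn * s) / k)" and nn: "\<forall>s\<in>{0..1}. ce (Mn * s) / k \<ge> 0"
    and cl: "\<forall>s\<in>{\<delta>..1}. \<bar>ce (Mn * s) / k - a * s powr \<rho>\<bar> \<le> \<eta>"
    and uv: "0 \<le> u" "u \<le> v" "v \<le> Mn" "v - u \<le> d * Mn"
  shows "v * ce v - u * ce u \<le> \<epsilon> * (Mn * k)"
proof -
  have h: "0 \<le> u/Mn" "u/Mn \<le> v/Mn" "v/Mn \<le> 1" "v/Mn - u/Mn \<le> d"
    using uv Mk by (auto simp: divide_right_mono diff_divide_distrib[symmetric] pos_divide_le_eq)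
  from R[unfolded RP_def, rule_format, OF mono nn[rule_format] cl[rule_format] h]
  have "v/Mn * (ce (Mn * (v/Mn)) / k) - u/Mn * (ce (Mn * (u/Mn)) / k) \<le> \<epsilon>" .
  then have "(v * ce v - u * ce u) / (Mn * k) \<le> \<epsilon>" using Mk by (simp add: field_simps)
  then show ?thesis using Mk by (simp add: pos_divide_le_eq)
qed

theorem corollary6p4:
  fixes E :: "'e set" and src tgt :: "'e \<Rightarrow> 'v" and I :: "'i set"
    and orig dest :: "'i \<Rightarrow> 'v" and P :: "'i \<Rightarrow> 'e list set"
    and c :: "'e \<Rightarrow> real \<Rightarrow> real" and m :: "nat \<Rightarrow> 'i \<Rightarrow> real"
    and F :: "real filter" and cb :: "real \<Rightarrow> real" and \<alpha> :: "'e \<Rightarrow> ereal"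
    and feq :: "nat \<Rightarrow> 'e list \<Rightarrow> real"
  assumes net: "routing_network E src tgt I orig dest P"
    and costs: "admissible_costs E c"
    and dem_nonneg: "\<forall>n. \<forall>i\<in>I. m n i \<ge> 0"
    and M_pos: "\<forall>n. (\<Sum>i\<in>I. m n i) > 0"
    and omega: "F = at_right 0 \<or> F = at_top"
    and M_lim: "filterlim (\<lambda>n. \<Sum>i\<in>I. m n i) F sequentially"
    and bench: "benchmark F E c cb \<alpha>"
    and tight: "0 < (MAX i\<in>I. od_alpha P \<alpha> i)" "(MAX i\<in>I. od_alpha P \<alpha> i) < \<infinity>"
    and salient: "\<forall>i\<in>I. liminf (\<lambda>n. ereal (m n i / (\<Sum>j\<in>I. m n j))) > 0"
    and equilibria: "\<forall>n. wardrop c I P (m n) (feq n)"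
  shows "(\<lambda>n. poa E c I P (m n) (feq n)) \<longlonglongrightarrow> 1"
proof -
  interpret N: nw E src tgt I orig dest P c using net costs by unfold_locales
  have rvF: "regularly_varying F cb" using bench by (simp add: benchmark_def)
  interpret B: bm F cb using omega rvF by unfold_locales
  have blim: "\<And>e. e \<in> E \<Longrightarrow> ((\<lambda>x. ereal (c e x / cb x)) \<longlongrightarrow> \<alpha> e) F"
    using bench by (simp add: benchmark_def)
  have cmono: "\<And>e. e \<in> E \<Longrightarrow> mono_on {0..} (c e)" by (rule N.cost_mono_on)
  have cnn: "\<And>e x. e \<in> E \<Longrightarrow> 0 \<le> x \<Longrightarrow> 0 \<le> c e x" by (rule N.cost_nn)
  define M where "M n = (\<Sum>i\<in>I. m n i)" for n
  have Mpos: "M n > 0" for n using M_pos by (simp add: M_def)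
  have Mlim: "filterlim M F sequentially" using M_lim by (simp add: M_def[abs_def])
  have kpos: "cb (M n) > 0" for n using B.cb_pos Mpos by blast
  have Ine: "I \<noteq> {}" using Mpos[of 0] by (auto simp: M_def)
  define Amax where "Amax = (MAX i\<in>I. od_alpha P \<alpha> i)"
  have "Amax \<in> od_alpha P \<alpha> ` I" unfolding Amax_def using N.finI Ine by (intro Max_in) auto
  then obtain i0 where i0: "i0 \<in> I" "od_alpha P \<alpha> i0 = Amax" by auto
  have od_le: "od_alpha P \<alpha> i \<le> Amax" if "i \<in> I" for i
    unfolding Amax_def using N.finI that by (intro Max_ge) auto
  obtain A where A: "Amax = ereal A" "A > 0"
    using tight unfolding Amax_def[symmetric] by (cases Amax) auto
  have "\<forall>i\<in>I. \<exists>p. p \<in> P i \<and> max 0 (SUP e\<in>set p. \<alpha> e) = od_alpha P \<alpha> i"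
  proof
    fix i assume "i \<in> I"
    from od_alpha_attained[of P i \<alpha>, OF N.finP[OF this] N.P_ne[OF this]]
    show "\<exists>p. p \<in> P i \<and> max 0 (SUP e\<in>set p. \<alpha> e) = od_alpha P \<alpha> i" by (rule bexE) blast
  qed
  from bchoice[OF this] obtain q where q: "\<forall>i\<in>I. q i \<in> P i \<and> max 0 (SUP e\<in>set (q i). \<alpha> e) = od_alpha P \<alpha> i"
    by (elim exE)
  have qfin: "\<alpha> e \<noteq> \<infinity>" if "i \<in> I" "e \<in> set (q i)" for i e
  proof -
    have "\<alpha> e \<le> max 0 (SUP e\<in>set (q i). \<alpha> e)" using sup_le that(2) by fast
    also have "\<dots> \<le> Amax" using q od_le that(1) by auto
    finally show ?thesis using A by auto
  qed
  interpret Q: nwq E src tgt I orig dest P c \<alpha> q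
    using q qfin by unfold_locales auto
  obtain e0 where e0: "e0 \<in> E" "\<alpha> e0 = ereal A"
  proof -
    have mq: "max 0 (SUP e\<in>set (q i0). \<alpha> e) = ereal A" using q i0 A by auto
    then obtain e where e: "e \<in> set (q i0)" "ereal A \<le> \<alpha> e"
      using sup_attained[where s="ereal A" and p="q i0" and \<alpha>=\<alpha>] A by auto
    have "\<alpha> e \<le> ereal A" using sup_le[OF e(1), where \<alpha>=\<alpha>] mq by simp
    then have "\<alpha> e = ereal A" using e by simp
    moreover have "e \<in> E" using N.path_E[OF i0(1)] q i0 e by auto
    ultimately show ?thesis using that by blast
  qed
  obtain \<rho> where rho: "\<rho> \<ge> 0" "\<And>x. x > 0 \<Longrightarrow> B.H x = x powr \<rho>"
    using B.H_power[OF cmono[OF e0(1)] cnn[OF e0(1)] blim[OF e0(1)] e0(2) A(2)] by blast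
  define a where "a e = real_of_ereal (\<alpha> e)" for e
  have anni: "\<alpha> e \<ge> 0" if "e \<in> E" for e
    using B.alpha_nonneg[OF cmono[OF that] cnn[OF that] blim[OF that]] .
  have afin: "\<alpha> e = ereal (a e)" "a e \<ge> 0" if "e \<in> E" "\<alpha> e \<noteq> \<infinity>" for e
    using anni[OF that(1)] that(2) by (cases "\<alpha> e"; simp add: a_def)+
  have fin_lim: "((\<lambda>n. c e (M n * s) / cb (M n)) \<longlongrightarrow> a e * s powr \<rho>) sequentially"
    if "e \<in> E" "\<alpha> e \<noteq> \<infinity>" "s > 0" for e s
  proof -
    have "((\<lambda>t. c e (t * s) / cb t) \<longlongrightarrow> a e * B.H s) F"
      using B.edge_fin[OF cmono[OF that(1)] cnn[OF that(1)] blim[OF that(1)] afin(1)[OF that(1,2)] that(3)] .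
    from filterlim_compose[OF this Mlim] show ?thesis using rho(2)[OF that(3)] by simp
  qed
  have inf_ev: "eventually (\<lambda>n. K * cb (M n) \<le> c e (M n * s)) sequentially"
    if "e \<in> E" "\<alpha> e = \<infinity>" "s > 0" for e s K
    using eventually_compose_filterlim[OF B.edge_inf[OF cmono[OF that(1)] cnn[OF that(1)] blim[OF that(1)] that(2,3), of K] Mlim] .
  have phimono: "mono_on S (\<lambda>s. c e (M n * s) / cb (M n))" if "e \<in> E" "S \<subseteq> {0..}" for e n S
  proof (rule mono_onI)
    fix r s assume rs: "r \<in> S" "s \<in> S" "r \<le> s"
    have h1: "M n * r \<le> M n * s" using rs Mpos[of n] by (intro mult_left_mono) auto
    have h2: "0 \<le> M n * r" using rs that(2) Mpos[of n] by auto
    have "c e (M n * r) \<le> c e (M n * s)" by (rule N.cost_mono[OF that(1) h2 h1])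
    then show "c e (M n * r) / cb (M n) \<le> c e (M n * s) / cb (M n)"
      using kpos[of n] by (intro divide_right_mono) auto
  qed
  have phinn: "\<forall>s\<in>{0..1}. 0 \<le> c e (M n * s) / cb (M n)" if "e \<in> E" for e n
    using cnn[OF that] Mpos[of n] kpos[of n] by auto
  have unif: "eventually (\<lambda>n. \<forall>s\<in>{\<delta>..1}. \<bar>c e (M n * s) / cb (M n) - a e * s powr \<rho>\<bar> \<le> \<eta>) sequentially"
    if "e \<in> E" "\<alpha> e \<noteq> \<infinity>" "0 < \<delta>" "\<delta> < 1" "\<eta> > 0" for e \<delta> \<eta>
  proof (rule unif_mono_conv[OF that(3,4) _ _ _ that(5)])
    show "continuous_on {\<delta>..1} (\<lambda>s. a e * s powr \<rho>)" using that(3)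
      by (intro continuous_intros) auto
    show "\<And>s. s \<in> {\<delta>..1} \<Longrightarrow> ((\<lambda>n. c e (M n * s) / cb (M n)) \<longlongrightarrow> a e * s powr \<rho>) sequentially"
      using fin_lim[OF that(1,2)] that(3) by auto
    show "\<forall>\<^sub>F n in sequentially. mono_on {\<delta>..1} (\<lambda>s. c e (M n * s) / cb (M n))"
      using phimono[OF that(1)] that(3) by (intro always_eventually) auto
  qed
  have wf: "wardrop c I P (m n) (feq n)" for n using equilibria by simp
  have ff: "feasible I P (m n) (feq n)" for n using wf by (simp add: wardrop_def)
  define C where "C = (\<Sum>e\<in>E. if \<alpha> e = \<infinity> then 0 else a e + 1)"
  have C0: "C \<ge> 0" unfolding C_def using afin by (intro sum_nonneg) auto
  have upper: "eventually (\<lambda>n. opt_cost E c I P (m n) \<le> C * (M n * cb (M n))) sequentially"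
  proof -
    have "eventually (\<lambda>n. \<forall>e\<in>{e\<in>E. \<alpha> e \<noteq> \<infinity>}. c e (M n * 1) / cb (M n) < a e + 1) sequentially"
    proof (rule eventually_ball_finite)
      show "finite {e\<in>E. \<alpha> e \<noteq> \<infinity>}" using N.finE by simp
      show "\<forall>e\<in>{e\<in>E. \<alpha> e \<noteq> \<infinity>}. eventually (\<lambda>n. c e (M n * 1) / cb (M n) < a e + 1) sequentially"
      proof
        fix e assume e: "e \<in> {e\<in>E. \<alpha> e \<noteq> \<infinity>}"
        have "((\<lambda>n. c e (M n * 1) / cb (M n)) \<longlongrightarrow> a e * 1 powr \<rho>) sequentially"
          using e by (intro fin_lim) auto
        then show "eventually (\<lambda>n. c e (M n * 1) / cb (M n) < a e + 1) sequentially"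
          by (intro order_tendstoD(2)) auto
      qed
    qed
    then show ?thesis
    proof (rule eventually_mono)
      fix n assume h: "\<forall>e\<in>{e\<in>E. \<alpha> e \<noteq> \<infinity>}. c e (M n * 1) / cb (M n) < a e + 1"
      define x' where "x' = load I P (Q.rr (feq n))"
      have f': "feasible I P (m n) (Q.rr (feq n))" by (rule Q.rr_feasible[OF ff])
      have "opt_cost E c I P (m n) \<le> social_cost E c x'"
        unfolding x'_def by (rule Q.opt_le[OF f'])
      also have "\<dots> \<le> (\<Sum>e\<in>E. (if \<alpha> e = \<infinity> then 0 else a e + 1) * (M n * cb (M n)))"
        unfolding social_cost_def
      proof (rule sum_mono)
        fix e assume e: "e \<in> E"
        show "x' e * c e (x' e) \<le> (if \<alpha> e = \<infinity> then 0 else a e + 1) * (M n * cb (M n))"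
        proof (cases "\<alpha> e = \<infinity>")
          case True
          then show ?thesis using Q.rr_load_inf[OF True] by (simp add: x'_def)
        next
          case False
          have x0: "0 \<le> x' e" unfolding x'_def by (rule N.load_nonneg[OF f'])
          have xM: "x' e \<le> M n" unfolding x'_def M_def by (rule N.load_le[OF f'])
          have "x' e * c e (x' e) \<le> M n * c e (M n)" by (rule N.prod_mono[OF e x0 xM])
          also have "c e (M n) \<le> (a e + 1) * cb (M n)"
            using h e False kpos[of n] by (auto simp: pos_divide_less_eq less_imp_le)
          then have "M n * c e (M n) \<le> M n * ((a e + 1) * cb (M n))"
            using Mpos[of n] by (intro mult_left_mono) auto
          finally show ?thesis using False by (simp add: algebra_simps)
        qed
      qed
      also have "\<dots> = C * (M n * cb (M n))" by (simp add: C_def sum_distrib_right)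
      finally show "opt_cost E c I P (m n) \<le> C * (M n * cb (M n))" .
    qed
  qed
  obtain \<kappa> where kap: "\<kappa> > 0" "eventually (\<lambda>n. \<kappa> * (M n * cb (M n)) \<le> opt_cost E c I P (m n)) sequentially"
  proof -
    have "0 < liminf (\<lambda>n. ereal (m n i0 / M n))" using salient i0(1) by (simp add: M_def)
    then obtain z where z: "0 < z" "z < liminf (\<lambda>n. ereal (m n i0 / M n))" using dense by blast
    define lam where "lam = real_of_ereal z"
    have zlam: "z = ereal lam" using z by (cases z) (auto simp: lam_def)
    have lam0: "lam > 0" using z zlam by simp
    have evlam: "eventually (\<lambda>n. lam < m n i0 / M n) sequentially"
      using less_LiminfD[OF z(2)] zlam by simp
    define K where "K = real (card (P i0))"
    have Kpos: "K > 0" using N.finP[OF i0(1)] N.P_ne[OF i0(1)] by (simp add: K_def card_gt_0_iff)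
    define \<beta> where "\<beta> = lam / K"
    have b0: "\<beta> > 0" using lam0 Kpos by (simp add: \<beta>_def)
    define \<kappa>' where "\<kappa>' = A * \<beta> powr \<rho> / 2"
    have k'0: "\<kappa>' > 0" using A b0 by (simp add: \<kappa>'_def)
    define Hv where "Hv = {e\<in>E. ereal A \<le> \<alpha> e}"
    have evH: "eventually (\<lambda>n. \<forall>e\<in>Hv. \<kappa>' * cb (M n) \<le> c e (M n * \<beta>)) sequentially"
    proof (rule eventually_ball_finite)
      show "finite Hv" using N.finE by (simp add: Hv_def)
      show "\<forall>e\<in>Hv. eventually (\<lambda>n. \<kappa>' * cb (M n) \<le> c e (M n * \<beta>)) sequentially"
      proof
        fix e assume e: "e \<in> Hv"
        show "eventually (\<lambda>n. \<kappa>' * cb (M n) \<le> c e (M n * \<beta>)) sequentially"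
        proof (cases "\<alpha> e = \<infinity>")
          case True
          then show ?thesis using e b0 by (intro inf_ev) (auto simp: Hv_def)
        next
          case False
          have eE: "e \<in> E" and aA: "ereal A \<le> \<alpha> e" using e by (auto simp: Hv_def)
          have "A \<le> a e" using afin(1)[OF eE False] aA by simp
          then have "A * \<beta> powr \<rho> \<le> a e * \<beta> powr \<rho>" using b0 by (intro mult_right_mono) auto
          moreover have "\<kappa>' < A * \<beta> powr \<rho>" using A b0 by (simp add: \<kappa>'_def)
          ultimately have lt: "\<kappa>' < a e * \<beta> powr \<rho>" by linarith
          have "eventually (\<lambda>n. \<kappa>' < c e (M n * \<beta>) / cb (M n)) sequentially"
            using fin_lim[OF eE False b0] lt by (intro order_tendstoD(1)) auto
          then show ?thesis
          proof (rule eventually_mono)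
            fix n assume "\<kappa>' < c e (M n * \<beta>) / cb (M n)"
            then show "\<kappa>' * cb (M n) \<le> c e (M n * \<beta>)" using kpos[of n] by (simp add: pos_less_divide_eq less_imp_le)
          qed
        qed
      qed
    qed
    have heavy: "\<exists>e\<in>set p. e \<in> Hv" if p: "p \<in> P i0" for p
    proof -
      have "ereal A \<le> max 0 (SUP e\<in>set p. \<alpha> e)" using od_alpha_le[where p=p and P=P and i=i0 and \<alpha>=\<alpha>, OF p] i0 A by simp
      from sup_attained[where s="ereal A" and p=p and \<alpha>=\<alpha>, OF _ this] A
      obtain e where "e \<in> set p" "ereal A \<le> \<alpha> e" by auto
      moreover have "e \<in> E" using N.path_E[OF i0(1) p] \<open>e \<in> set p\<close> by auto
      ultimately show ?thesis by (auto simp: Hv_def)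
    qed
    show ?thesis
    proof (rule that[of "\<beta> * \<kappa>'"])
      show "\<beta> * \<kappa>' > 0" using b0 k'0 by simp
      show "eventually (\<lambda>n. \<beta> * \<kappa>' * (M n * cb (M n)) \<le> opt_cost E c I P (m n)) sequentially"
        using eventually_conj[OF evlam evH]
      proof (rule eventually_mono)
        fix n assume hh: "lam < m n i0 / M n \<and> (\<forall>e\<in>Hv. \<kappa>' * cb (M n) \<le> c e (M n * \<beta>))"
        then have lamn: "lam < m n i0 / M n" and Hn: "\<forall>e\<in>Hv. \<kappa>' * cb (M n) \<le> c e (M n * \<beta>)" by auto
        show "\<beta> * \<kappa>' * (M n * cb (M n)) \<le> opt_cost E c I P (m n)"
        proof (rule Q.opt_ge[OF ff])
          fix f assume f: "feasible I P (m n) f"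
          obtain p where p: "p \<in> P i0" "m n i0 / K \<le> f p"
          proof (rule ccontr)
            assume "\<not> thesis"
            then have lt: "\<forall>p\<in>P i0. f p < m n i0 / K" using that by force
            have "(\<Sum>p\<in>P i0. f p) < (\<Sum>p\<in>P i0. m n i0 / K)"
              using N.finP[OF i0(1)] N.P_ne[OF i0(1)] lt by (intro sum_strict_mono) auto
            also have "\<dots> = m n i0" using Kpos by (simp add: K_def)
            finally show False using f i0(1) by (simp add: feasible_def)
          qed
          obtain e where e: "e \<in> set p" "e \<in> Hv" using heavy[OF p(1)] by blast
          have eE: "e \<in> E" using e by (simp add: Hv_def)
          have pAP: "p \<in> all_paths I P" using p(1) i0(1) by (auto simp: N.AP_mem)
          have "f p \<le> load I P f e" unfolding load_def
            using pAP e(1) N.finAP N.feas_nonneg[OF f] by (intro member_le_sum) auto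
          moreover have "M n * \<beta> \<le> m n i0 / K"
          proof -
            have "lam * M n < m n i0" using lamn Mpos[of n] by (simp add: pos_less_divide_eq)
            then have "lam * M n / K \<le> m n i0 / K" using Kpos by (intro divide_right_mono) auto
            then show ?thesis by (simp add: \<beta>_def mult.commute)
          qed
          ultimately have lb: "M n * \<beta> \<le> load I P f e" using p(2) by linarith
          have "c e (M n * \<beta>) \<le> c e (load I P f e)"
            using lb Mpos[of n] b0 by (intro N.cost_mono[OF eE]) auto
          then have cb2: "\<kappa>' * cb (M n) \<le> c e (load I P f e)" using Hn e(2) by force
          have "\<beta> * \<kappa>' * (M n * cb (M n)) = (M n * \<beta>) * (\<kappa>' * cb (M n))" by (simp add: algebra_simps)
          also have "\<dots> \<le> load I P f e * c e (load I P f e)"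
            using lb cb2 Mpos[of n] b0 k'0 kpos[of n] N.load_nonneg[OF f] by (intro mult_mono) auto
          also have "\<dots> \<le> social_cost E c (load I P f)" by (rule N.sc_ge_term[OF f eE])
          finally show "\<beta> * \<kappa>' * (M n * cb (M n)) \<le> social_cost E c (load I P f)" .
        qed
      qed
    qed
  qed
  have main: "eventually (\<lambda>n. social_cost E c (load I P (feq n)) \<le> opt_cost E c I P (m n) + \<epsilon> * (M n * cb (M n))) sequentially"
    if eps: "\<epsilon> > 0" for \<epsilon>
  proof -
    define nE where "nE = real (card E)"
    define T where "T = 1 + nE + (\<rho>+1) * nE"
    have T1: "T \<ge> 1" using rho by (simp add: T_def nE_def)
    define \<epsilon>1 where "\<epsilon>1 = min 1 (\<epsilon> / T)"
    have e1: "\<epsilon>1 > 0" "\<epsilon>1 \<le> 1" using eps T1 by (auto simp: \<epsilon>1_def)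
    have Te: "T * \<epsilon>1 \<le> \<epsilon>"
    proof -
      have "\<epsilon>1 \<le> \<epsilon> / T" by (simp add: \<epsilon>1_def)
      then have "T * \<epsilon>1 \<le> T * (\<epsilon> / T)" using T1 by (intro mult_left_mono) auto
      then show ?thesis using T1 by simp
    qed
    define Ef where "Ef = {e\<in>E. \<alpha> e \<noteq> \<infinity>}"
    have finEf: "finite Ef" using N.finE by (simp add: Ef_def)
    have "\<forall>e\<in>Ef. \<exists>\<delta>. \<exists>\<eta>. \<delta> > 0 \<and> \<delta> \<le> 1/2 \<and> \<eta> > 0 \<and> YP (a e) \<rho> \<epsilon>1 \<delta> \<eta>"
      using YP_ex[OF e1(1) _ rho(1)] afin(2) by (auto simp: Ef_def)
    from bchoice[OF this] obtain \<delta>y where "\<forall>e\<in>Ef. \<exists>\<eta>. \<delta>y e > 0 \<and> \<delta>y e \<le> 1/2 \<and> \<eta> > 0 \<and> YP (a e) \<rho> \<epsilon>1 (\<delta>y e) \<eta>"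
      by (elim exE)
    from bchoice[OF this] obtain \<eta>y where Yc: "\<forall>e\<in>Ef. \<delta>y e > 0 \<and> \<delta>y e \<le> 1/2 \<and> \<eta>y e > 0 \<and> YP (a e) \<rho> \<epsilon>1 (\<delta>y e) (\<eta>y e)"
      by (elim exE)
    have "\<forall>e\<in>Ef. \<exists>\<delta>. \<exists>\<eta>. \<exists>d. \<delta> > 0 \<and> \<delta> \<le> 1/2 \<and> \<eta> > 0 \<and> d > 0 \<and> RP (a e) \<rho> \<epsilon>1 \<delta> \<eta> d"
      using RP_ex[OF e1(1) _ rho(1)] afin(2) by (auto simp: Ef_def)
    from bchoice[OF this] obtain \<delta>r where "\<forall>e\<in>Ef. \<exists>\<eta>. \<exists>d. \<delta>r e > 0 \<and> \<delta>r e \<le> 1/2 \<and> \<eta> > 0 \<and> d > 0 \<and> RP (a e) \<rho> \<epsilon>1 (\<delta>r e) \<eta> d"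
      by (elim exE)
    from bchoice[OF this] obtain \<eta>r where "\<forall>e\<in>Ef. \<exists>d. \<delta>r e > 0 \<and> \<delta>r e \<le> 1/2 \<and> \<eta>r e > 0 \<and> d > 0 \<and> RP (a e) \<rho> \<epsilon>1 (\<delta>r e) (\<eta>r e) d"
      by (elim exE)
    from bchoice[OF this] obtain dr where Rc: "\<forall>e\<in>Ef. \<delta>r e > 0 \<and> \<delta>r e \<le> 1/2 \<and> \<eta>r e > 0 \<and> dr e > 0 \<and> RP (a e) \<rho> \<epsilon>1 (\<delta>r e) (\<eta>r e) (dr e)"
      by (elim exE)
    define dd where "dd = Min (insert 1 (dr ` Ef))"
    have dd0: "dd > 0" unfolding dd_def using finEf Rc by (subst Min_gr_iff) auto
    have ddle: "dd \<le> dr e" if "e \<in> Ef" for e unfolding dd_def using finEf that by (intro Min_le) auto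
    define \<delta>' where "\<delta>' = dd / (nE + 1)"
    have d'0: "\<delta>' > 0" using dd0 by (simp add: \<delta>'_def nE_def)
    have d'le: "nE * \<delta>' \<le> dd"
    proof -
      have "nE * \<delta>' = dd * (nE / (nE + 1))" by (simp add: \<delta>'_def)
      also have "\<dots> \<le> dd * 1" using dd0 by (intro mult_left_mono) (auto simp: nE_def)
      finally show ?thesis by simp
    qed
    have EY: "eventually (\<lambda>n. \<forall>e\<in>Ef. \<forall>s\<in>{\<delta>y e..1}. \<bar>c e (M n * s) / cb (M n) - a e * s powr \<rho>\<bar> \<le> \<eta>y e) sequentially"
      using finEf Yc by (intro eventually_ball_finite ballI unif) (auto simp: Ef_def)
    have ER: "eventually (\<lambda>n. \<forall>e\<in>Ef. \<forall>s\<in>{\<delta>r e..1}. \<bar>c e (M n * s) / cb (M n) - a e * s powr \<rho>\<bar> \<le> \<eta>r e) sequentially"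
      using finEf Rc by (intro eventually_ball_finite ballI unif) (auto simp: Ef_def)
    have EI: "eventually (\<lambda>n. \<forall>e\<in>{e\<in>E. \<alpha> e = \<infinity>}. (C+2)/\<delta>' * cb (M n) \<le> c e (M n * \<delta>')) sequentially"
      using N.finE d'0 by (intro eventually_ball_finite ballI inf_ev) auto
    show ?thesis
      using eventually_conj[OF EY eventually_conj[OF ER eventually_conj[OF EI upper]]]
    proof (rule eventually_mono)
      fix n
      assume hh: "(\<forall>e\<in>Ef. \<forall>s\<in>{\<delta>y e..1}. \<bar>c e (M n * s) / cb (M n) - a e * s powr \<rho>\<bar> \<le> \<eta>y e) \<and>
        (\<forall>e\<in>Ef. \<forall>s\<in>{\<delta>r e..1}. \<bar>c e (M n * s) / cb (M n) - a e * s powr \<rho>\<bar> \<le> \<eta>r e) \<and>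
        (\<forall>e\<in>{e\<in>E. \<alpha> e = \<infinity>}. (C+2)/\<delta>' * cb (M n) \<le> c e (M n * \<delta>')) \<and>
        opt_cost E c I P (m n) \<le> C * (M n * cb (M n))"
      have st: "social_cost E c (load I P (feq n)) \<le> opt_cost E c I P (m n) + (1 + real (card E) + (\<rho>+1) * real (card E)) * \<epsilon>1 * (M n * cb (M n))"
      proof (rule Q.step[OF wf _ Mpos kpos rho(1) e1 C0])
        show "M n = sum (m n) I" by (simp add: M_def)
        show "opt_cost E c I P (m n) \<le> C * (M n * cb (M n))" using hh by blast
        show "\<delta>' > 0" by (rule d'0)
        show "real (card E) * \<delta>' \<le> dd" using d'le by (simp add: nE_def)
        show "u * c e w \<le> (u * c e u + \<rho> * (w * c e w)) / (\<rho>+1) + \<epsilon>1 * (M n * cb (M n))"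
          if "e \<in> E" "\<alpha> e \<noteq> \<infinity>" "0 \<le> u" "u \<le> M n" "0 \<le> w" "w \<le> M n" for e u w
        proof -
          have eEf: "e \<in> Ef" using that by (simp add: Ef_def)
          show ?thesis
            using scale_young[OF Mpos kpos _ phimono[OF that(1)] phinn[OF that(1)] _ that(3-6) rho(1)] Yc eEf hh
            by auto
        qed
        show "v * c e v - u * c e u \<le> \<epsilon>1 * (M n * cb (M n))"
          if "e \<in> E" "\<alpha> e \<noteq> \<infinity>" "0 \<le> u" "u \<le> v" "v \<le> M n" "v - u \<le> dd * M n" for e u v
        proof -
          have eEf: "e \<in> Ef" using that by (simp add: Ef_def)
          have "dd * M n \<le> dr e * M n" using ddle[OF eEf] Mpos[of n] by (intro mult_right_mono) auto
          then have vu: "v - u \<le> dr e * M n" using that(6) by linarith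
          show ?thesis
            using scale_reroute[OF Mpos kpos _ phimono[OF that(1)] phinn[OF that(1)] _ that(3-5) vu] Rc eEf hh
            by auto
        qed
        show "(C+2)/\<delta>' * cb (M n) \<le> c e (M n * \<delta>')" if "e \<in> E" "\<alpha> e = \<infinity>" for e
          using hh that by blast
      qed
      have "(1 + real (card E) + (\<rho>+1) * real (card E)) * \<epsilon>1 * (M n * cb (M n)) \<le> \<epsilon> * (M n * cb (M n))"
        using Te Mpos[of n] kpos[of n] by (intro mult_right_mono) (auto simp: T_def nE_def)
      then show "social_cost E c (load I P (feq n)) \<le> opt_cost E c I P (m n) + \<epsilon> * (M n * cb (M n))"
        using st by linarith
    qed
  qed
  show ?thesis
  proof (rule tendstoI)
    fix \<epsilon> :: real assume eps: "\<epsilon> > 0"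
    have e2: "\<epsilon> * \<kappa> / 2 > 0" using eps kap(1) by simp
    show "eventually (\<lambda>n. dist (poa E c I P (m n) (feq n)) 1 < \<epsilon>) sequentially"
      using eventually_conj[OF main[OF e2] kap(2)]
    proof (rule eventually_mono)
      fix n
      assume hh: "social_cost E c (load I P (feq n)) \<le> opt_cost E c I P (m n) + \<epsilon> * \<kappa> / 2 * (M n * cb (M n)) \<and>
        \<kappa> * (M n * cb (M n)) \<le> opt_cost E c I P (m n)"
      define Eq where "Eq = social_cost E c (load I P (feq n))"
      define Op where "Op = opt_cost E c I P (m n)"
      have B0: "M n * cb (M n) > 0" using Mpos[of n] kpos[of n] by simp
      have Op0: "Op > 0" using hh kap(1) B0 unfolding Op_def by (smt (verit) mult_pos_pos)
      have EqOp: "Op \<le> Eq" unfolding Op_def Eq_def by (rule Q.opt_le[OF ff])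
      have "\<epsilon> * \<kappa> / 2 * (M n * cb (M n)) = \<epsilon> / 2 * (\<kappa> * (M n * cb (M n)))" by simp
      also have "\<dots> \<le> \<epsilon> / 2 * Op" using hh eps unfolding Op_def by (intro mult_left_mono) auto
      finally have "Eq \<le> Op + \<epsilon> / 2 * Op" using hh unfolding Eq_def Op_def by linarith
      then have up: "Eq / Op \<le> 1 + \<epsilon> / 2" using Op0 by (simp add: divide_le_eq algebra_simps)
      have lo: "1 \<le> Eq / Op" using EqOp Op0 by simp
      have "poa E c I P (m n) (feq n) = Eq / Op" using Op0 unfolding poa_def Eq_def Op_def by simp
      then show "dist (poa E c I P (m n) (feq n)) 1 < \<epsilon>" using up lo eps by (simp add: dist_real_def)
    qed
  qed
qed

end
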